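(* (Generalized Fractional Noether's Theorem.) Let $a<b$, $1<p<\infty$, $q=p/(p-1)$, $\Delta=\{(t,\tau):a\le\tau<t\le b\}$, $k\in L^q(\Delta;\mathbb{R})$, $\lambda,\mu\in\mathbb{R}$, and let $K_P,K_{P^*},A_{P^*},B_P$ be as in the context. Let $F:\mathbb{R}^4\times[a,b]\to\mathbb{R}$ be of class $C^1$ and write $(\star_y)(t)=(y(t),K_P[y](t),\dot y(t),B_P[y](t),t)$. Let $\phi:[-\varepsilon,\varepsilon]\times[a,b]\times\mathbb{R}\to\mathbb{R}$ be of class $C^2$ with $\phi(0,t,x)=x$, set $\xi(t,x)=\frac{\partial\phi}{\partial\theta}(0,t,x)$ and $\hat y(t)=\phi(\theta,t,y(t))$. Suppose $F$ is invariant under this family, i.e. $t\mapsto\xi(t,y(t))\in C^1([a,b];\mathbb{R})$ with $K_P[\tau\mapsto\xi(\tau,y(\tau))],B_P[\tau\mapsto\xi(\tau,y(\tau))]\in C([a,b];\mathbb{R})$, and $F(\star_y)(t)=F(\star_{\hat y})(t)$ for all $\theta\in[-\varepsilon,\varepsilon]$ and all $y\in C^1([a,b];\mathbb{R})$ with $K_P[y],B_P[y]\in C([a,b];\mathbb{R})$. Then every generalized fractional extremal $y$ satisfies, for $t\in(a,b)$, $$\frac{d}{dt}\big(\xi(t,y(t))\,\partial_3F(\star_y)(t)\big)+\mathbf{D}\big[\xi(\cdot,y(\cdot)),\partial_4F(\star_y)\big](t)+\mathbf{I}\big[\xi(\cdot,y(\cdot)),\partial_2F(\star_y)\big](t)=0,$$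 where $\mathbf{D}[f,g]=f\cdot A_{P^*}[g]+g\cdot B_P[f]$ and $\mathbf{I}[f,g]=-f\cdot K_{P^*}[g]+g\cdot K_P[f]$.
   Context: $K_P[f](t)=\lambda\int_a^t k(t,\tau)f(\tau)d\tau+\mu\int_t^b k(\tau,t)f(\tau)d\tau$; $K_{P^*}[f](t)=\mu\int_a^t k(t,\tau)f(\tau)d\tau+\lambda\int_t^b k(\tau,t)f(\tau)d\tau$; $A_{P^*}=\frac{d}{dt}\circ K_{P^*}$; $B_P=K_P\circ\frac{d}{dt}$. $\partial_iF$ is the partial derivative of $F$ in its $i$-th argument. A generalized fractional extremal is a function $y\in C^1([a,b];\mathbb{R})$ with $K_P[y],B_P[y]\in C([a,b];\mathbb{R})$ satisfying for $t\in(a,b)$ the generalized Euler–Lagrange equation $\frac{d}{dt}[\partial_3F(\star_y)(t)]+A_{P^*}[\tau\mapsto\partial_4F(\star_y)(\tau)](t)=\partial_1F(\star_y)(t)+K_{P^*}[\tau\mapsto\partial_2F(\star_y)(\tau)](t)$ (with the needed regularity: $K_{P^*}[\partial_2F(\star_y)]$ continuous, $\partial_3F(\star_y)$ and $K_{P^*}[\partial_4F(\star_y)]$ continuously differentiable on $[a,b]$). *)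

theory Defs
  imports "HOL-Analysis.Analysis"
begin

definition C1_on :: "'a::real_normed_vector set \<Rightarrow> ('a \<Rightarrow> 'b::real_normed_vector) \<Rightarrow> bool" where
  "C1_on S f \<longleftrightarrow> (\<exists>f'. (\<forall>x\<in>S. (f has_derivative blinfun_apply (f' x)) (at x within S))
                         \<and> continuous_on S f')"

definition C2_on :: "'a::real_normed_vector set \<Rightarrow> ('a \<Rightarrow> 'b::real_normed_vector) \<Rightarrow> bool" where
  "C2_on S f \<longleftrightarrow> (\<exists>f'. (\<forall>x\<in>S. (f has_derivative blinfun_apply (f' x)) (at x within S))
                         \<and> C1_on S f')"

definition dot :: "real \<Rightarrow> real \<Rightarrow> (real \<Rightarrow> real) \<Rightarrow> real \<Rightarrow> real" where
  "dot a b y t = vector_derivative y (at t within {a..b})"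

definition KP :: "real \<Rightarrow> real \<Rightarrow> (real \<Rightarrow> real \<Rightarrow> real) \<Rightarrow> real \<Rightarrow> real \<Rightarrow> (real \<Rightarrow> real) \<Rightarrow> real \<Rightarrow> real" where
  "KP a b k lam mu f t = lam * (LINT \<tau>:{a..t}|lebesgue. k t \<tau> * f \<tau>)
                        + mu * (LINT \<tau>:{t..b}|lebesgue. k \<tau> t * f \<tau>)"

definition KPs :: "real \<Rightarrow> real \<Rightarrow> (real \<Rightarrow> real \<Rightarrow> real) \<Rightarrow> real \<Rightarrow> real \<Rightarrow> (real \<Rightarrow> real) \<Rightarrow> real \<Rightarrow> real" where
  "KPs a b k lam mu f t = mu * (LINT \<tau>:{a..t}|lebesgue. k t \<tau> * f \<tau>)
                         + lam * (LINT \<tau>:{t..b}|lebesgue. k \<tau> t * f \<tau>)"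

definition APs :: "real \<Rightarrow> real \<Rightarrow> (real \<Rightarrow> real \<Rightarrow> real) \<Rightarrow> real \<Rightarrow> real \<Rightarrow> (real \<Rightarrow> real) \<Rightarrow> real \<Rightarrow> real" where
  "APs a b k lam mu f t = deriv (KPs a b k lam mu f) t"

definition BP :: "real \<Rightarrow> real \<Rightarrow> (real \<Rightarrow> real \<Rightarrow> real) \<Rightarrow> real \<Rightarrow> real \<Rightarrow> (real \<Rightarrow> real) \<Rightarrow> real \<Rightarrow> real" where
  "BP a b k lam mu f = KP a b k lam mu (dot a b f)"

definition admissible :: "real \<Rightarrow> real \<Rightarrow> (real \<Rightarrow> real \<Rightarrow> real) \<Rightarrow> real \<Rightarrow> real \<Rightarrow> (real \<Rightarrow> real) \<Rightarrow> bool" where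
  "admissible a b k lam mu y \<longleftrightarrow> C1_on {a..b} y
     \<and> continuous_on {a..b} (KP a b k lam mu y) \<and> continuous_on {a..b} (BP a b k lam mu y)"

type_synonym lagr = "real \<Rightarrow> real \<Rightarrow> real \<Rightarrow> real \<Rightarrow> real \<Rightarrow> real"

definition Fstar :: "real \<Rightarrow> real \<Rightarrow> (real \<Rightarrow> real \<Rightarrow> real) \<Rightarrow> real \<Rightarrow> real \<Rightarrow> lagr \<Rightarrow> (real \<Rightarrow> real) \<Rightarrow> real \<Rightarrow> real" where
  "Fstar a b k lam mu F y t = F (y t) (KP a b k lam mu y t) (dot a b y t) (BP a b k lam mu y t) t"

definition d1F :: "real \<Rightarrow> real \<Rightarrow> (real \<Rightarrow> real \<Rightarrow> real) \<Rightarrow> real \<Rightarrow> real \<Rightarrow> lagr \<Rightarrow> (real \<Rightarrow> real) \<Rightarrow> real \<Rightarrow> real" where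
  "d1F a b k lam mu F y t = deriv (\<lambda>z. F z (KP a b k lam mu y t) (dot a b y t) (BP a b k lam mu y t) t) (y t)"
definition d2F :: "real \<Rightarrow> real \<Rightarrow> (real \<Rightarrow> real \<Rightarrow> real) \<Rightarrow> real \<Rightarrow> real \<Rightarrow> lagr \<Rightarrow> (real \<Rightarrow> real) \<Rightarrow> real \<Rightarrow> real" where
  "d2F a b k lam mu F y t = deriv (\<lambda>z. F (y t) z (dot a b y t) (BP a b k lam mu y t) t) (KP a b k lam mu y t)"
definition d3F :: "real \<Rightarrow> real \<Rightarrow> (real \<Rightarrow> real \<Rightarrow> real) \<Rightarrow> real \<Rightarrow> real \<Rightarrow> lagr \<Rightarrow> (real \<Rightarrow> real) \<Rightarrow> real \<Rightarrow> real" where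
  "d3F a b k lam mu F y t = deriv (\<lambda>z. F (y t) (KP a b k lam mu y t) z (BP a b k lam mu y t) t) (dot a b y t)"
definition d4F :: "real \<Rightarrow> real \<Rightarrow> (real \<Rightarrow> real \<Rightarrow> real) \<Rightarrow> real \<Rightarrow> real \<Rightarrow> lagr \<Rightarrow> (real \<Rightarrow> real) \<Rightarrow> real \<Rightarrow> real" where
  "d4F a b k lam mu F y t = deriv (\<lambda>z. F (y t) (KP a b k lam mu y t) (dot a b y t) z t) (BP a b k lam mu y t)"

definition gen_frac_extremal :: "real \<Rightarrow> real \<Rightarrow> (real \<Rightarrow> real \<Rightarrow> real) \<Rightarrow> real \<Rightarrow> real \<Rightarrow> lagr \<Rightarrow> (real \<Rightarrow> real) \<Rightarrow> bool" where
  "gen_frac_extremal a b k lam mu F y \<longleftrightarrow>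
     admissible a b k lam mu y
     \<and> continuous_on {a..b} (KPs a b k lam mu (d2F a b k lam mu F y))
     \<and> C1_on {a..b} (d3F a b k lam mu F y)
     \<and> C1_on {a..b} (KPs a b k lam mu (d4F a b k lam mu F y))
     \<and> (\<forall>t\<in>{a<..<b}.
          deriv (d3F a b k lam mu F y) t + APs a b k lam mu (d4F a b k lam mu F y) t
          = d1F a b k lam mu F y t + KPs a b k lam mu (d2F a b k lam mu F y) t)"

definition xi :: "(real \<Rightarrow> real \<Rightarrow> real \<Rightarrow> real) \<Rightarrow> real \<Rightarrow> real \<Rightarrow> real" where
  "xi phi t x = deriv (\<lambda>\<theta>. phi \<theta> t x) 0"

end

theory Submission
  imports Defs
begin

lemma C1_cont: "C1_on S f \<Longrightarrow> continuous_on S f"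
  unfolding C1_on_def continuous_on_eq_continuous_within
  by (auto intro: has_derivative_continuous)

lemma C1_dot:
  fixes f :: "real \<Rightarrow> real"
  assumes ab: "a < b" and f': "\<And>x. x \<in> {a..b} \<Longrightarrow> (f has_derivative blinfun_apply (f' x)) (at x within {a..b})"
    and s: "s \<in> {a..b}"
  shows "(f has_vector_derivative f' s 1) (at s within {a..b})" "dot a b f s = f' s 1"
proof -
  have "blinfun_apply (f' s) = (\<lambda>h. h *\<^sub>R f' s 1)"
    by (rule ext) (metis blinfun.scaleR_right mult.right_neutral real_scaleR_def)
  then show v: "(f has_vector_derivative f' s 1) (at s within {a..b})"
    using f'[OF s] unfolding has_vector_derivative_def by simp
  show "dot a b f s = f' s 1"
    unfolding dot_def using vector_derivative_within_closed_interval[of a b s f] v ab s by simp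
qed

lemma C1_dot_cont:
  fixes f :: "real \<Rightarrow> real"
  assumes ab: "a < b" and "C1_on {a..b} f"
  shows "continuous_on {a..b} (dot a b f)"
proof -
  obtain f' where f': "\<And>x. x \<in> {a..b} \<Longrightarrow> (f has_derivative blinfun_apply (f' x)) (at x within {a..b})"
    and c: "continuous_on {a..b} f'" using assms(2) unfolding C1_on_def by blast
  have "continuous_on {a..b} (\<lambda>s. f' s 1)"
    using c by (intro continuous_intros) auto
  then show ?thesis
    by (rule continuous_on_eq) (use C1_dot[OF ab f'] in auto)
qed

lemma C1_has_deriv_interior:
  fixes f :: "real \<Rightarrow> real"
  assumes ab: "a < b" and "C1_on {a..b} f" and s: "s \<in> {a<..<b}"
  shows "(f has_real_derivative dot a b f s) (at s)"
proof -
  obtain f' where f': "\<And>x. x \<in> {a..b} \<Longrightarrow> (f has_derivative blinfun_apply (f' x)) (at x within {a..b})"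
    using assms(2) unfolding C1_on_def by blast
  have s': "s \<in> {a..b}" using s by auto
  have "(f has_vector_derivative f' s 1) (at s within {a..b})" using C1_dot[OF ab f' s'] by auto
  then have "(f has_vector_derivative f' s 1) (at s)"
    using s by (metis at_within_Icc_at greaterThanLessThan_iff)
  then show ?thesis using C1_dot[OF ab f' s'] by (simp add: has_real_derivative_iff_has_vector_derivative)
qed

lemma schwarz_approx:
  fixes f :: "'a::real_normed_vector \<Rightarrow> real" and f' :: "'a \<Rightarrow> 'a \<Rightarrow>\<^sub>L real"
    and B :: "'a \<Rightarrow>\<^sub>L 'a \<Rightarrow>\<^sub>L real"
  assumes U: "open U" "P \<in> U"
    and d1: "\<And>x. x\<in>U \<Longrightarrow> (f has_derivative blinfun_apply (f' x)) (at x)"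
    and d2: "(f' has_derivative blinfun_apply B) (at P)"
    and e: "e > 0"
  shows "\<exists>\<delta>>0. \<forall>h. 0 < h \<and> h < \<delta> \<longrightarrow>
     \<bar>f (P + h *\<^sub>R u + h *\<^sub>R v) - f (P + h *\<^sub>R u) - f (P + h *\<^sub>R v) + f P - h*h * B v u\<bar> \<le> e * (h*h)"
proof -
  define C where "C = (2 * norm u + norm v) * norm u + 1"
  have C: "C > 0" unfolding C_def by (simp add: add_nonneg_pos)
  define e' where "e' = e / C"
  have e': "e' > 0" using e C by (simp add: e'_def)
  obtain d where d: "d > 0" and dd: "\<And>y. norm (y - P) < d \<Longrightarrow>
      norm (f' y - f' P - B (y - P)) \<le> e' * norm (y - P)"
    using d2 e' unfolding has_derivative_at_alt by blast
  obtain r where r: "r > 0" "ball P r \<subseteq> U" using U openE by blast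
  define \<delta> where "\<delta> = min d r / (norm u + norm v + 1)"
  have \<delta>: "\<delta> > 0" using d r by (simp add: \<delta>_def add_nonneg_pos)
  have small: "norm (s *\<^sub>R u + h *\<^sub>R v) < min d r" if "0 \<le> s" "0 \<le> h" "s < \<delta>" "h < \<delta>" for s h
  proof -
    have "norm (s *\<^sub>R u + h *\<^sub>R v) \<le> s * norm u + h * norm v"
      using norm_triangle_ineq[of "s *\<^sub>R u" "h *\<^sub>R v"] that by simp
    also have "\<dots> \<le> \<delta> * norm u + \<delta> * norm v"
      using that by (intro add_mono mult_right_mono) auto
    also have "\<dots> < \<delta> * (norm u + norm v + 1)"
      using \<delta> by (simp add: distrib_left)
    also have "\<dots> = min d r" unfolding \<delta>_def
      using add_nonneg_pos[OF add_nonneg_nonneg[OF norm_ge_zero[of u] norm_ge_zero[of v]] zero_less_one] by simp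
    finally show ?thesis .
  qed
  have "\<forall>h. 0 < h \<and> h < \<delta> \<longrightarrow>
     \<bar>f (P + h *\<^sub>R u + h *\<^sub>R v) - f (P + h *\<^sub>R u) - f (P + h *\<^sub>R v) + f P - h*h * B v u\<bar> \<le> e * (h*h)"
  proof (intro allI impI)
    fix h :: real assume h: "0 < h \<and> h < \<delta>"
    define g where "g s = f (P + s *\<^sub>R u + h *\<^sub>R v) - f (P + s *\<^sub>R u) - s * h * B v u" for s
    define g' where "g' s = f' (P + s *\<^sub>R u + h *\<^sub>R v) u - f' (P + s *\<^sub>R u) u - h * B v u" for s
    have inU: "P + s *\<^sub>R u + t *\<^sub>R v \<in> U" if "0 \<le> s" "s \<le> h" "0 \<le> t" "t \<le> h" for s t
    proof -
      have "norm (s *\<^sub>R u + t *\<^sub>R v) < min d r" using small[of s t] that h by simp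
      then have "P + s *\<^sub>R u + t *\<^sub>R v \<in> ball P r"
      proof -
        have "norm (- (s *\<^sub>R u) - t *\<^sub>R v) = norm (s *\<^sub>R u + t *\<^sub>R v)"
          by (metis minus_add_distrib norm_minus_cancel diff_conv_add_uminus)
        then show ?thesis using \<open>norm (s *\<^sub>R u + t *\<^sub>R v) < min d r\<close>
          by (simp add: dist_norm add.assoc)
      qed
      then show ?thesis using r by blast
    qed
    have deriv: "(g has_real_derivative g' s) (at s)" if "0 \<le> s" "s \<le> h" for s
    proof -
      have A: "((\<lambda>s. f (P + s *\<^sub>R u + h *\<^sub>R v)) has_derivative (\<lambda>t. f' (P + s *\<^sub>R u + h *\<^sub>R v) (t *\<^sub>R u))) (at s)"
      proof -
        have L: "((\<lambda>s. P + s *\<^sub>R u + h *\<^sub>R v) has_derivative (\<lambda>t. t *\<^sub>R u)) (at s)"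
          by (auto intro!: derivative_eq_intros)
        show ?thesis using has_derivative_compose[OF L d1[OF inU[OF that, of h]]] h by simp
      qed
      have B': "((\<lambda>s. f (P + s *\<^sub>R u)) has_derivative (\<lambda>t. f' (P + s *\<^sub>R u) (t *\<^sub>R u))) (at s)"
      proof -
        have L: "((\<lambda>s. P + s *\<^sub>R u) has_derivative (\<lambda>t. t *\<^sub>R u)) (at s)"
          by (auto intro!: derivative_eq_intros)
        show ?thesis using has_derivative_compose[OF L] d1[OF inU[OF that, of 0]] h by simp
      qed
      have "(g has_derivative (\<lambda>t. f' (P + s *\<^sub>R u + h *\<^sub>R v) (t *\<^sub>R u) - f' (P + s *\<^sub>R u) (t *\<^sub>R u) - t * (h * B v u))) (at s)"
      proof -
        have C': "((\<lambda>s. s * h * B v u) has_derivative (\<lambda>t. t * (h * B v u))) (at s)"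
          by (rule has_derivative_eq_rhs, (rule derivative_intros)+) (auto simp: algebra_simps)
        show ?thesis using has_derivative_diff[OF has_derivative_diff[OF A B'] C'] unfolding g_def .
      qed
      then show ?thesis unfolding has_field_derivative_def g'_def
        by (rule has_derivative_eq_rhs) (auto simp: blinfun.scaleR_right algebra_simps)
    qed
    obtain z where z: "0 < z" "z < h" "g h - g 0 = (h - 0) * g' z"
      using MVT2[of 0 h g g'] deriv h by auto
    have bound: "\<bar>g' z\<bar> \<le> e * h"
    proof -
      define w1 where "w1 = z *\<^sub>R u + h *\<^sub>R v"
      define w2 where "w2 = z *\<^sub>R u"
      have n1: "norm w1 < d" "norm w1 \<le> h * (norm u + norm v)"
      proof -
        show "norm w1 < d" using small[of z h] z h unfolding w1_def by simp
        have "norm w1 \<le> z * norm u + h * norm v"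
          using norm_triangle_ineq[of "z *\<^sub>R u" "h *\<^sub>R v"] z h unfolding w1_def by simp
        also have "\<dots> \<le> h * norm u + h * norm v"
          using z by (intro add_mono mult_right_mono) auto
        finally show "norm w1 \<le> h * (norm u + norm v)" by (simp add: distrib_left)
      qed
      have n2: "norm w2 < d" "norm w2 \<le> h * norm u"
        using small[of z 0] z h \<delta> unfolding w2_def apply force
        using z by (simp add: mult_right_mono)
      have R1: "norm (f' (P + w1) - f' P - B w1) \<le> e' * norm w1"
        using dd[of "P + w1"] n1 by simp
      have R2: "norm (f' (P + w2) - f' P - B w2) \<le> e' * norm w2"
        using dd[of "P + w2"] n2 by simp
      have eq: "g' z = (f' (P + w1) - f' P - B w1) u - (f' (P + w2) - f' P - B w2) u"
        unfolding g'_def w1_def w2_def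
        by (simp add: blinfun.diff_left blinfun.add_right blinfun.scaleR_right blinfun.add_left blinfun.scaleR_left add.assoc)
      have "\<bar>g' z\<bar> \<le> norm ((f' (P + w1) - f' P - B w1) u) + norm ((f' (P + w2) - f' P - B w2) u)"
        unfolding eq by (metis abs_triangle_ineq4 real_norm_def)
      also have "\<dots> \<le> norm (f' (P + w1) - f' P - B w1) * norm u + norm (f' (P + w2) - f' P - B w2) * norm u"
        by (intro add_mono norm_blinfun)
      also have "\<dots> \<le> (e' * (h * (norm u + norm v))) * norm u + (e' * (h * norm u)) * norm u"
      proof -
        have "norm (f' (P + w1) - f' P - B w1) \<le> e' * (h * (norm u + norm v))"
          using order_trans[OF R1 mult_left_mono[OF n1(2)]] e' by simp
        moreover have "norm (f' (P + w2) - f' P - B w2) \<le> e' * (h * norm u)"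
          using order_trans[OF R2 mult_left_mono[OF n2(2)]] e' by simp
        ultimately show ?thesis by (intro add_mono mult_right_mono) auto
      qed
      also have "\<dots> = e' * h * ((2 * norm u + norm v) * norm u)" by (simp add: algebra_simps)
      also have "\<dots> \<le> e' * h * C" using e' h by (intro mult_left_mono) (auto simp: C_def)
      also have "\<dots> = e * h" using C by (simp add: e'_def)
      finally show ?thesis .
    qed
    have "g h - g 0 = f (P + h *\<^sub>R u + h *\<^sub>R v) - f (P + h *\<^sub>R u) - f (P + h *\<^sub>R v) + f P - h*h * B v u"
      unfolding g_def by simp
    then have "\<bar>\<dots>\<bar> = \<bar>h * g' z\<bar>" using z by simp
    also have "\<dots> = h * \<bar>g' z\<bar>" using h by (simp add: abs_mult)
    also have "\<dots> \<le> h * (e * h)" using bound h by (intro mult_left_mono) auto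
    finally show "\<bar>f (P + h *\<^sub>R u + h *\<^sub>R v) - f (P + h *\<^sub>R u) - f (P + h *\<^sub>R v) + f P - h*h * B v u\<bar> \<le> e * (h*h)"
      by (simp add: algebra_simps)
  qed
  then show ?thesis using \<delta> by blast
qed

lemma schwarz:
  fixes f :: "'a::real_normed_vector \<Rightarrow> real" and f' :: "'a \<Rightarrow> 'a \<Rightarrow>\<^sub>L real"
    and B :: "'a \<Rightarrow>\<^sub>L 'a \<Rightarrow>\<^sub>L real"
  assumes U: "open U" "P \<in> U"
    and d1: "\<And>x. x\<in>U \<Longrightarrow> (f has_derivative blinfun_apply (f' x)) (at x)"
    and d2: "(f' has_derivative blinfun_apply B) (at P)"
  shows "B v u = B u v"
proof (rule ccontr)
  assume ne: "B v u \<noteq> B u v"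
  define e where "e = \<bar>B v u - B u v\<bar> / 4"
  have e: "e > 0" using ne by (simp add: e_def)
  obtain d1' where "d1' > 0" and D1: "\<forall>h. 0 < h \<and> h < d1' \<longrightarrow>
     \<bar>f (P + h *\<^sub>R u + h *\<^sub>R v) - f (P + h *\<^sub>R u) - f (P + h *\<^sub>R v) + f P - h*h * B v u\<bar> \<le> e * (h*h)"
    using schwarz_approx[OF U d1 d2 e, of u v] by blast
  obtain d2' where "d2' > 0" and D2: "\<forall>h. 0 < h \<and> h < d2' \<longrightarrow>
     \<bar>f (P + h *\<^sub>R v + h *\<^sub>R u) - f (P + h *\<^sub>R v) - f (P + h *\<^sub>R u) + f P - h*h * B u v\<bar> \<le> e * (h*h)"
    using schwarz_approx[OF U d1 d2 e, of v u] by blast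
  define h where "h = min d1' d2' / 2"
  have h: "0 < h" "h < d1'" "h < d2'" using \<open>d1' > 0\<close> \<open>d2' > 0\<close> by (auto simp: h_def)
  have hh: "h * h > 0" using h by simp
  have "\<bar>h*h * B v u - h*h * B u v\<bar> \<le> e * (h*h) + e * (h*h)"
  proof -
    have A1: "\<bar>f (P + h *\<^sub>R u + h *\<^sub>R v) - f (P + h *\<^sub>R u) - f (P + h *\<^sub>R v) + f P - h*h * B v u\<bar> \<le> e * (h*h)"
      using D1 h by blast
    have A2: "\<bar>f (P + h *\<^sub>R v + h *\<^sub>R u) - f (P + h *\<^sub>R v) - f (P + h *\<^sub>R u) + f P - h*h * B u v\<bar> \<le> e * (h*h)"
      using D2 h by blast
    have eqP: "P + h *\<^sub>R v + h *\<^sub>R u = P + h *\<^sub>R u + h *\<^sub>R v" by (simp add: algebra_simps)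
    have A2': "\<bar>f (P + h *\<^sub>R u + h *\<^sub>R v) - f (P + h *\<^sub>R v) - f (P + h *\<^sub>R u) + f P - h*h * B u v\<bar> \<le> e * (h*h)"
      using A2 unfolding eqP .
    show ?thesis using A1 A2' unfolding abs_le_iff by linarith
  qed
  then have "\<bar>h*h * B v u - h*h * B u v\<bar> \<le> 2 * e * (h*h)" by simp
  then have "h*h * \<bar>B v u - B u v\<bar> \<le> h*h * (2 * e)"
    by (simp add: abs_mult right_diff_distrib[symmetric] mult.commute mult.left_commute)
  then have "\<bar>B v u - B u v\<bar> \<le> 2 * e" using hh mult_le_cancel_left_pos by blast
  then show False using e unfolding e_def by simp
qed

lemma cont_indicator_meas:
  fixes h :: "real \<Rightarrow> real"
  assumes "continuous_on {a..b} h"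
  shows "(\<lambda>x. indicator {a..b} x * h x) \<in> borel_measurable lebesgue"
proof -
  have "(\<lambda>x. indicator {a..b} x *\<^sub>R h x) \<in> borel_measurable borel"
    by (rule borel_measurable_continuous_on_indicator) (use assms in auto)
  then have "(\<lambda>x. indicator {a..b} x *\<^sub>R h x) \<in> borel_measurable lborel"
    by simp
  then have "(\<lambda>x. indicator {a..b} x *\<^sub>R h x) \<in> borel_measurable lebesgue" by (rule measurable_completion)
  then show ?thesis by simp
qed

lemma set_integrable_cont_mult:
  fixes \<kappa> h :: "real \<Rightarrow> real"
  assumes \<kappa>: "set_integrable lebesgue A \<kappa>" and A: "A \<subseteq> {a..b}"
    and h: "continuous_on {a..b} h"
  shows "set_integrable lebesgue A (\<lambda>x. \<kappa> x * h x)"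
proof -
  obtain M where M: "\<And>x. x \<in> {a..b} \<Longrightarrow> norm (h x) \<le> M"
    using compact_imp_bounded[OF compact_continuous_image[OF h compact_Icc]]
    unfolding bounded_iff by blast
  have m1: "(\<lambda>x. indicator A x *\<^sub>R \<kappa> x) \<in> borel_measurable lebesgue"
    using \<kappa> unfolding set_integrable_def by (rule borel_measurable_integrable)
  have "(\<lambda>x. (indicator A x *\<^sub>R \<kappa> x) * (indicator {a..b} x * h x)) \<in> borel_measurable lebesgue"
    by (rule borel_measurable_times[OF m1 cont_indicator_meas[OF h]])
  also have "(\<lambda>x. (indicator A x *\<^sub>R \<kappa> x) * (indicator {a..b} x * h x)) = (\<lambda>x. indicator A x *\<^sub>R (\<kappa> x * h x))"
    using A by (auto simp: indicator_def fun_eq_iff)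
  finally have meas: "set_borel_measurable lebesgue A (\<lambda>x. \<kappa> x * h x)"
    unfolding set_borel_measurable_def .
  show ?thesis
  proof (rule set_integrable_bound[OF _ meas])
    show "set_integrable lebesgue A (\<lambda>x. M * \<kappa> x)" using \<kappa> by simp
    show "AE x in lebesgue. x \<in> A \<longrightarrow> norm (\<kappa> x * h x) \<le> norm (M * \<kappa> x)"
    proof (rule AE_I2, rule impI)
      fix x assume "x \<in> A"
      then have "\<bar>h x\<bar> \<le> M" using M A by auto
      then show "norm (\<kappa> x * h x) \<le> norm (M * \<kappa> x)"
        using mult_left_mono[of "\<bar>h x\<bar>" M "\<bar>\<kappa> x\<bar>"] by (simp add: abs_mult mult.commute)
    qed
  qed
qed

lemma LINT_has_deriv:
  fixes \<kappa> :: "real \<Rightarrow> real" and g :: "real \<Rightarrow> real \<Rightarrow> real"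
  assumes \<kappa>: "set_integrable lebesgue A \<kappa>" and A: "A \<subseteq> {a..b}"
    and eps: "eps > 0"
    and gc: "\<And>\<theta>. \<theta> \<in> {-eps..eps} \<Longrightarrow> continuous_on {a..b} (g \<theta>)"
    and Gc: "continuous_on {a..b} G"
    and unif: "\<And>e. e > 0 \<Longrightarrow> \<exists>d>0. \<forall>\<theta>\<in>{-eps..eps}. \<bar>\<theta>\<bar> < d \<longrightarrow>
                  (\<forall>s\<in>{a..b}. \<bar>g \<theta> s - g 0 s - \<theta> * G s\<bar> \<le> e * \<bar>\<theta>\<bar>)"
  shows "((\<lambda>\<theta>. LINT \<tau>:A|lebesgue. \<kappa> \<tau> * g \<theta> \<tau>) has_real_derivative (LINT \<tau>:A|lebesgue. \<kappa> \<tau> * G \<tau>)) (at 0)"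
  unfolding has_field_derivative_def has_derivative_at_alt
proof (intro conjI allI impI)
  show "bounded_linear ((*) (LINT \<tau>:A|lebesgue. \<kappa> \<tau> * G \<tau>))"
    by (rule bounded_linear_mult_right)
  fix e :: real assume e: "e > 0"
  define C where "C = (LINT \<tau>:A|lebesgue. \<bar>\<kappa> \<tau>\<bar>) + 1"
  have C0: "(LINT \<tau>:A|lebesgue. \<bar>\<kappa> \<tau>\<bar>) \<ge> 0"
    unfolding set_lebesgue_integral_def by (rule Bochner_Integration.integral_nonneg) (auto simp: indicator_def)
  then have C: "C > 0" unfolding C_def by simp
  obtain d where d: "d > 0" and dd: "\<forall>\<theta>\<in>{-eps..eps}. \<bar>\<theta>\<bar> < d \<longrightarrow>
                  (\<forall>s\<in>{a..b}. \<bar>g \<theta> s - g 0 s - \<theta> * G s\<bar> \<le> e / C * \<bar>\<theta>\<bar>)"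
    using unif[of "e / C"] e C by auto
  show "\<exists>d>0. \<forall>y. norm (y - 0) < d \<longrightarrow>
       norm ((LINT \<tau>:A|lebesgue. \<kappa> \<tau> * g y \<tau>) - (LINT \<tau>:A|lebesgue. \<kappa> \<tau> * g 0 \<tau>) -
          (LINT \<tau>:A|lebesgue. \<kappa> \<tau> * G \<tau>) * (y - 0)) \<le> e * norm (y - 0)"
  proof (intro exI[of _ "min d eps"] conjI allI impI)
    show "min d eps > 0" using d eps by simp
    fix \<theta> :: real assume "norm (\<theta> - 0) < min d eps"
    then have th: "\<bar>\<theta>\<bar> < d" "\<theta> \<in> {-eps..eps}" by auto
    have i1: "set_integrable lebesgue A (\<lambda>\<tau>. \<kappa> \<tau> * g \<theta> \<tau>)"
      by (rule set_integrable_cont_mult[OF \<kappa> A gc[OF th(2)]])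
    have i0: "set_integrable lebesgue A (\<lambda>\<tau>. \<kappa> \<tau> * g 0 \<tau>)"
      by (rule set_integrable_cont_mult[OF \<kappa> A gc]) (use eps in auto)
    have iG: "set_integrable lebesgue A (\<lambda>\<tau>. \<kappa> \<tau> * (\<theta> * G \<tau>))"
      using set_integrable_cont_mult[OF \<kappa> A Gc] by (simp add: mult.left_commute)
    have eq: "(LINT \<tau>:A|lebesgue. \<kappa> \<tau> * g \<theta> \<tau>) - (LINT \<tau>:A|lebesgue. \<kappa> \<tau> * g 0 \<tau>) -
          (LINT \<tau>:A|lebesgue. \<kappa> \<tau> * G \<tau>) * \<theta>
        = (LINT \<tau>:A|lebesgue. \<kappa> \<tau> * (g \<theta> \<tau> - g 0 \<tau> - \<theta> * G \<tau>))"
    proof -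
      have "(LINT \<tau>:A|lebesgue. \<kappa> \<tau> * (g \<theta> \<tau> - g 0 \<tau> - \<theta> * G \<tau>))
          = (LINT \<tau>:A|lebesgue. \<kappa> \<tau> * g \<theta> \<tau> - \<kappa> \<tau> * g 0 \<tau> - \<kappa> \<tau> * (\<theta> * G \<tau>))"
        by (simp add: algebra_simps)
      also have "\<dots> = (LINT \<tau>:A|lebesgue. \<kappa> \<tau> * g \<theta> \<tau>) - (LINT \<tau>:A|lebesgue. \<kappa> \<tau> * g 0 \<tau>)
             - (LINT \<tau>:A|lebesgue. \<kappa> \<tau> * (\<theta> * G \<tau>))"
        using i1 i0 iG by (simp add: set_integral_diff)
      also have "(LINT \<tau>:A|lebesgue. \<kappa> \<tau> * (\<theta> * G \<tau>)) = (LINT \<tau>:A|lebesgue. \<kappa> \<tau> * G \<tau>) * \<theta>"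
      proof -
        have "(LINT \<tau>:A|lebesgue. \<kappa> \<tau> * (\<theta> * G \<tau>)) = (LINT \<tau>:A|lebesgue. \<theta> * (\<kappa> \<tau> * G \<tau>))"
          by (simp add: ac_simps)
        also have "\<dots> = \<theta> * (LINT \<tau>:A|lebesgue. \<kappa> \<tau> * G \<tau>)"
          by (rule set_integral_mult_right)
        finally show ?thesis by simp
      qed
      finally show ?thesis by simp
    qed
    have ir: "set_integrable lebesgue A (\<lambda>\<tau>. \<kappa> \<tau> * (g \<theta> \<tau> - g 0 \<tau> - \<theta> * G \<tau>))"
      using set_integral_diff(1)[OF set_integral_diff(1)[OF i1 i0] iG] by (simp add: algebra_simps)
    have "\<bar>LINT \<tau>:A|lebesgue. \<kappa> \<tau> * (g \<theta> \<tau> - g 0 \<tau> - \<theta> * G \<tau>)\<bar>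
        \<le> (LINT \<tau>:A|lebesgue. \<bar>\<kappa> \<tau> * (g \<theta> \<tau> - g 0 \<tau> - \<theta> * G \<tau>)\<bar>)"
      unfolding set_lebesgue_integral_def
      using integral_norm_bound[of lebesgue "\<lambda>x. indicator A x *\<^sub>R (\<kappa> x * (g \<theta> x - g 0 x - \<theta> * G x))"]
      by (simp add: abs_mult abs_indicator)
    also have "\<dots> \<le> (LINT \<tau>:A|lebesgue. \<bar>\<kappa> \<tau>\<bar> * (e / C * \<bar>\<theta>\<bar>))"
    proof (rule set_integral_mono)
      show "set_integrable lebesgue A (\<lambda>\<tau>. \<bar>\<kappa> \<tau> * (g \<theta> \<tau> - g 0 \<tau> - \<theta> * G \<tau>)\<bar>)"
        using ir by (rule set_integrable_abs)
      show "set_integrable lebesgue A (\<lambda>\<tau>. \<bar>\<kappa> \<tau>\<bar> * (e / C * \<bar>\<theta>\<bar>))"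
        using set_integrable_abs[OF \<kappa>] by simp
      fix x assume "x \<in> A"
      then show "\<bar>\<kappa> x * (g \<theta> x - g 0 x - \<theta> * G x)\<bar> \<le> \<bar>\<kappa> x\<bar> * (e / C * \<bar>\<theta>\<bar>)"
      proof -
        have "\<bar>g \<theta> x - g 0 x - \<theta> * G x\<bar> \<le> e / C * \<bar>\<theta>\<bar>" using dd th A \<open>x \<in> A\<close> by blast
        then show ?thesis unfolding abs_mult by (rule mult_left_mono) simp
      qed
    qed
    also have "\<dots> = (LINT \<tau>:A|lebesgue. \<bar>\<kappa> \<tau>\<bar>) * (e / C * \<bar>\<theta>\<bar>)"
      by simp
    also have "\<dots> \<le> C * (e / C * \<bar>\<theta>\<bar>)"
      using e C by (intro mult_right_mono) (auto simp: C_def)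
    also have "\<dots> = e * \<bar>\<theta>\<bar>" using C by simp
    finally show "norm ((LINT \<tau>:A|lebesgue. \<kappa> \<tau> * g \<theta> \<tau>) - (LINT \<tau>:A|lebesgue. \<kappa> \<tau> * g 0 \<tau>) -
          (LINT \<tau>:A|lebesgue. \<kappa> \<tau> * G \<tau>) * (\<theta> - 0)) \<le> e * norm (\<theta> - 0)"
      using eq by simp
  qed
qed

lemma Delta_sets: "{(t, \<tau>). a \<le> \<tau> \<and> \<tau> < t \<and> t \<le> (b::real)} \<in> sets borel"
proof -
  have 1: "{z::real\<times>real. a \<le> snd z} \<in> sets borel"
    by (intro borel_closed closed_Collect_le continuous_intros)
  have 2: "{z::real\<times>real. snd z < fst z} \<in> sets borel"
    by (intro borel_open open_Collect_less continuous_intros)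
  have 3: "{z::real\<times>real. fst z \<le> b} \<in> sets borel"
    by (intro borel_closed closed_Collect_le continuous_intros)
  have "{(t, \<tau>). a \<le> \<tau> \<and> \<tau> < t \<and> t \<le> b} = {z::real\<times>real. a \<le> snd z} \<inter> {z. snd z < fst z} \<inter> {z. fst z \<le> b}"
    by auto
  then show ?thesis using 1 2 3 by simp
qed

lemma Delta_integrable:
  fixes k :: "real \<Rightarrow> real \<Rightarrow> real" and q :: real
  assumes q: "q \<ge> 1"
    and k_meas: "set_borel_measurable lebesgue {(t, \<tau>). a \<le> \<tau> \<and> \<tau> < t \<and> t \<le> b} (\<lambda>z. k (fst z) (snd z))"
    and k_Lq: "set_integrable lebesgue {(t, \<tau>). a \<le> \<tau> \<and> \<tau> < t \<and> t \<le> b} (\<lambda>z. \<bar>k (fst z) (snd z)\<bar> powr q)"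
  shows "set_integrable lebesgue {(t, \<tau>). a \<le> \<tau> \<and> \<tau> < t \<and> t \<le> b} (\<lambda>z. k (fst z) (snd z))"
proof -
  let ?D = "{(t, \<tau>). a \<le> \<tau> \<and> \<tau> < t \<and> t \<le> (b::real)}"
  have Ds: "?D \<in> sets lebesgue" using Delta_sets by (simp add: sets_completionI_sets)
  have "?D \<subseteq> cbox (a, a) (b, b)" by (auto simp: cbox_Pair_iff)
  then have "bounded ?D" using bounded_cbox bounded_subset by blast
  then have "?D \<in> lmeasurable" using Ds by (rule bounded_set_imp_lmeasurable)
  then have fin: "emeasure lebesgue ?D < \<infinity>" by (simp add: fmeasurable_def del: emeasure_completion)
  have one: "set_integrable lebesgue ?D (\<lambda>_. 1::real)"
    unfolding set_integrable_def by (rule integrable_indicator[OF Ds fin])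
  show ?thesis
  proof (rule set_integrable_bound[OF _ k_meas])
    show "set_integrable lebesgue ?D (\<lambda>z. 1 + \<bar>k (fst z) (snd z)\<bar> powr q)"
      using one k_Lq by (rule set_integral_add)
    show "AE x in lebesgue. x \<in> ?D \<longrightarrow> norm (k (fst x) (snd x)) \<le> norm (1 + \<bar>k (fst x) (snd x)\<bar> powr q)"
    proof (rule AE_I2, rule impI)
      fix x :: "real \<times> real"
      let ?y = "\<bar>k (fst x) (snd x)\<bar>"
      have "?y \<le> 1 + ?y powr q"
      proof (cases "?y \<le> 1")
        case True then show ?thesis using powr_ge_zero[of ?y q] by linarith
      next
        case False
        then have "?y powr 1 \<le> ?y powr q" using q by (intro powr_mono) auto
        then show ?thesis using False by simp
      qed
      then show "norm (k (fst x) (snd x)) \<le> norm (1 + ?y powr q)" by simp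
    qed
  qed
qed

lemma good_AE:
  fixes k :: "real \<Rightarrow> real \<Rightarrow> real" and a b :: real
  assumes kint: "set_integrable lebesgue {(t, \<tau>). a \<le> \<tau> \<and> \<tau> < t \<and> t \<le> b} (\<lambda>z. k (fst z) (snd z))"
  shows "AE t in lborel. t \<in> {a<..<b} \<longrightarrow> set_integrable lebesgue {a..t} (\<lambda>\<tau>. k t \<tau>)
                \<and> set_integrable lebesgue {t..b} (\<lambda>\<tau>. k \<tau> t)"
proof -
  let ?D = "{(t, \<tau>). a \<le> \<tau> \<and> \<tau> < t \<and> t \<le> (b::real)}"
  define KD where "KD z = indicator ?D z *\<^sub>R k (fst z) (snd z)" for z :: "real \<times> real"
  have iKD: "integrable lebesgue KD" using kint unfolding set_integrable_def KD_def .
  have mKD: "KD \<in> borel_measurable (completion lborel)" using borel_measurable_integrable[OF iKD] by simp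
  obtain g where g: "g \<in> borel_measurable lborel" and ae: "AE z in lborel. KD z = g z"
    using completion_ex_borel_measurable_real[OF mKD] by blast
  have gB: "g \<in> borel_measurable borel" using g by simp
  have "integrable lebesgue g"
    using iKD measurable_completion[OF g] AE_completion[OF ae] by (rule integrable_cong_AE_imp)
  then have ig: "integrable lborel g" using integrable_completion[OF g] by simp
  have LP: "(lborel \<Otimes>\<^sub>M lborel :: (real\<times>real) measure) = lborel" by (rule lborel_prod)
  have PI: "pair_sigma_finite (lborel::real measure) (lborel::real measure)"
    by (simp add: pair_sigma_finite_def lborel.sigma_finite_measure_axioms)
  have igP: "integrable (lborel \<Otimes>\<^sub>M lborel) g" using ig LP by simp
  have A1: "AE t in lborel. integrable lborel (\<lambda>\<tau>. g (t,\<tau>))" by (rule pair_sigma_finite.AE_integrable_fst'[OF PI igP])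
  have A2: "AE t in lborel. integrable lborel (\<lambda>\<tau>. g (\<tau>,t))"
    using pair_sigma_finite.AE_integrable_snd[OF PI, of "\<lambda>x y. g (x,y)"] igP by simp
  from ae obtain N where N: "{z \<in> space lborel. KD z \<noteq> g z} \<subseteq> N" "emeasure lborel N = 0" "N \<in> sets lborel"
    by (rule AE_E) blast
  have NP: "N \<in> null_sets (lborel \<Otimes>\<^sub>M lborel)" using N LP by (simp add: null_sets_def)
  have "AE z in lborel \<Otimes>\<^sub>M lborel. z \<notin> N" using NP by (rule AE_not_in)
  then have A3: "AE t in lborel. AE \<tau> in lborel. (t, \<tau>) \<notin> N" using pair_sigma_finite.AE_pair[OF PI] by fastforce
  have Nmeas: "{x \<in> space (lborel \<Otimes>\<^sub>M lborel). (fst x, snd x) \<notin> N} \<in> sets (lborel \<Otimes>\<^sub>M lborel)"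
  proof -
    have "{x \<in> space (lborel \<Otimes>\<^sub>M lborel). (fst x, snd x) \<notin> N} = space (lborel \<Otimes>\<^sub>M lborel) - N" by auto
    then show ?thesis using sets.compl_sets[OF null_setsD2[OF NP]] by (simp only:)
  qed
  have "AE \<tau> in lborel. AE t in lborel. (t, \<tau>) \<notin> N"
    using A3 pair_sigma_finite.AE_commute[OF PI, of "\<lambda>x y. (x, y) \<notin> N", OF Nmeas] by simp
  then have A4: "AE t in lborel. AE \<tau> in lborel. (\<tau>, t) \<notin> N" .
  have Neq: "KD z = g z" if "z \<notin> N" for z using N that by auto
  have mg1: "(\<lambda>\<tau>. g (t, \<tau>)) \<in> borel_measurable lborel" for t
  proof -
    have "(\<lambda>\<tau>::real. (t, \<tau>)) \<in> borel_measurable borel"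
      by (rule borel_measurable_continuous_onI) (intro continuous_intros)
    from measurable_compose[OF this gB] show ?thesis by simp
  qed
  have mg2: "(\<lambda>\<tau>. g (\<tau>, t)) \<in> borel_measurable lborel" for t
  proof -
    have "(\<lambda>\<tau>::real. (\<tau>, t)) \<in> borel_measurable borel"
      by (rule borel_measurable_continuous_onI) (intro continuous_intros)
    from measurable_compose[OF this gB] show ?thesis by simp
  qed
  show ?thesis
    using A1 A2 A3 A4
  proof eventually_elim
    case (elim t)
    show ?case
    proof
      assume t: "t \<in> {a<..<b}"
      have ae1: "AE \<tau> in lborel. g (t, \<tau>) = indicator {a..t} \<tau> *\<^sub>R k t \<tau>"
        using elim(3) AE_lborel_singleton[of t]
      proof eventually_elim
        case (elim \<tau>)
        then have "g (t, \<tau>) = KD (t, \<tau>)" using Neq by auto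
        also have "\<dots> = indicator {a..t} \<tau> *\<^sub>R k t \<tau>"
          using t elim by (auto simp: KD_def indicator_def)
        finally show ?case .
      qed
      have ae2: "AE \<tau> in lborel. g (\<tau>, t) = indicator {t..b} \<tau> *\<^sub>R k \<tau> t"
        using elim(4) AE_lborel_singleton[of t]
      proof eventually_elim
        case (elim \<tau>)
        then have "g (\<tau>, t) = KD (\<tau>, t)" using Neq by auto
        also have "\<dots> = indicator {t..b} \<tau> *\<^sub>R k \<tau> t"
          using t elim by (auto simp: KD_def indicator_def)
        finally show ?case .
      qed
      have i1: "integrable lebesgue (\<lambda>\<tau>. g (t, \<tau>))"
        using elim(1) integrable_completion[OF mg1[of t]] by simp
      have i2: "integrable lebesgue (\<lambda>\<tau>. g (\<tau>, t))"
        using elim(2) integrable_completion[OF mg2[of t]] by simp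
      have ae1': "AE \<tau> in lebesgue. g (t, \<tau>) = indicator {a..t} \<tau> *\<^sub>R k t \<tau>" using AE_completion[OF ae1] .
      have ae2': "AE \<tau> in lebesgue. g (\<tau>, t) = indicator {t..b} \<tau> *\<^sub>R k \<tau> t" using AE_completion[OF ae2] .
      have m1: "(\<lambda>\<tau>. indicator {a..t} \<tau> *\<^sub>R k t \<tau>) \<in> borel_measurable lebesgue"
        using borel_measurable_AE[OF measurable_completion[OF mg1[of t]] ae1'] .
      have m2: "(\<lambda>\<tau>. indicator {t..b} \<tau> *\<^sub>R k \<tau> t) \<in> borel_measurable lebesgue"
        using borel_measurable_AE[OF measurable_completion[OF mg2[of t]] ae2'] .
      show "set_integrable lebesgue {a..t} (\<lambda>\<tau>. k t \<tau>) \<and> set_integrable lebesgue {t..b} (\<lambda>\<tau>. k \<tau> t)"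
        unfolding set_integrable_def
        using integrable_cong_AE_imp[OF i1 m1 ae1'] integrable_cong_AE_imp[OF i2 m2 ae2'] by simp
    qed
  qed
qed

lemma AE_dense:
  assumes ae: "AE t in lborel. P t" and cd: "c < (d::real)"
  shows "\<exists>t\<in>{c<..<d}. P t"
proof (rule ccontr)
  assume "\<not> (\<exists>t\<in>{c<..<d}. P t)"
  then have sub: "{c<..<d} \<subseteq> {t \<in> space lborel. \<not> P t}" by auto
  from ae obtain N where N: "{t \<in> space lborel. \<not> P t} \<subseteq> N" "emeasure lborel N = 0" "N \<in> sets lborel"
    by (rule AE_E) blast
  have "emeasure lborel {c<..<d} \<le> emeasure lborel N"
    using sub N by (intro emeasure_mono) auto
  then have "emeasure lborel {c<..<d} = 0" using N by simp
  then show False using cd by simp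
qed

lemma cont_zero_AE:
  fixes f :: "real \<Rightarrow> real"
  assumes cont: "continuous_on {a<..<b} f"
    and ae: "AE t in lborel. t \<in> {a<..<b} \<longrightarrow> f t = 0"
    and t0: "t0 \<in> {a<..<b}"
  shows "f t0 = 0"
proof (rule ccontr)
  assume ne: "f t0 \<noteq> 0"
  obtain d where d: "d > 0" and dd: "\<forall>x'\<in>{a<..<b}. dist x' t0 < d \<longrightarrow> dist (f x') (f t0) < \<bar>f t0\<bar>"
    using cont t0 ne unfolding continuous_on_iff by (metis zero_less_abs_iff)
  have lt: "max a (t0 - d) < min b (t0 + d)" using t0 d by auto
  obtain t where t: "t \<in> {max a (t0 - d)<..<min b (t0 + d)}" "t \<in> {a<..<b} \<longrightarrow> f t = 0"
    using AE_dense[OF ae lt] by blast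
  have tin: "t \<in> {a<..<b}" "dist t t0 < d" using t(1) by (auto simp: dist_real_def)
  then have "dist (f t) (f t0) < \<bar>f t0\<bar>" using dd by blast
  then show False using t(2) tin by (simp add: dist_real_def)
qed

lemma KP_deriv:
  fixes k :: "real \<Rightarrow> real \<Rightarrow> real" and g :: "real \<Rightarrow> real \<Rightarrow> real"
  assumes good1: "set_integrable lebesgue {a..t} (\<lambda>\<tau>. k t \<tau>)"
    and good2: "set_integrable lebesgue {t..b} (\<lambda>\<tau>. k \<tau> t)"
    and t: "t \<in> {a..b}"
    and eps: "eps > 0"
    and gc: "\<And>\<theta>. \<theta> \<in> {-eps..eps} \<Longrightarrow> continuous_on {a..b} (g \<theta>)"
    and Gc: "continuous_on {a..b} G"
    and unif: "\<And>e. e > 0 \<Longrightarrow> \<exists>d>0. \<forall>\<theta>\<in>{-eps..eps}. \<bar>\<theta>\<bar> < d \<longrightarrow>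
                  (\<forall>s\<in>{a..b}. \<bar>g \<theta> s - g 0 s - \<theta> * G s\<bar> \<le> e * \<bar>\<theta>\<bar>)"
  shows "((\<lambda>\<theta>. KP a b k lam mu (g \<theta>) t) has_real_derivative KP a b k lam mu G t) (at 0)"
proof -
  have A1: "{a..t} \<subseteq> {a..b}" "{t..b} \<subseteq> {a..b}" using t by auto
  have D1: "((\<lambda>\<theta>. LINT \<tau>:{a..t}|lebesgue. k t \<tau> * g \<theta> \<tau>) has_real_derivative (LINT \<tau>:{a..t}|lebesgue. k t \<tau> * G \<tau>)) (at 0)"
    by (rule LINT_has_deriv[OF good1 A1(1) eps gc Gc unif])
  have D2: "((\<lambda>\<theta>. LINT \<tau>:{t..b}|lebesgue. k \<tau> t * g \<theta> \<tau>) has_real_derivative (LINT \<tau>:{t..b}|lebesgue. k \<tau> t * G \<tau>)) (at 0)"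
    by (rule LINT_has_deriv[OF good2 A1(2) eps gc Gc unif])
  show ?thesis unfolding KP_def
    by (intro DERIV_add DERIV_cmult D1 D2)
qed

lemma deriv_along:
  fixes G :: "'a::real_normed_vector \<Rightarrow> real" and L :: "real \<Rightarrow> 'a"
  assumes dG: "\<And>X. X \<in> T \<Longrightarrow> (G has_derivative DG X) (at X within T)"
    and DGl: "\<And>X. X \<in> T \<Longrightarrow> linear (DG X)"
    and V: "open V" "z0 \<in> V" and LV: "\<And>z. z \<in> V \<Longrightarrow> L z \<in> T"
    and L: "(L has_derivative (\<lambda>h. h *\<^sub>R v)) (at z0)"
  shows "((\<lambda>z. G (L z)) has_real_derivative DG (L z0) v) (at z0)"
proof -
  have "((\<lambda>z. G (L z)) has_derivative (\<lambda>h. DG (L z0) (h *\<^sub>R v))) (at z0 within V)"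
    by (rule has_derivative_in_compose2[of T G DG L V z0]) (use dG LV V L in \<open>auto intro: has_derivative_at_withinI\<close>)
  then have "((\<lambda>z. G (L z)) has_derivative (\<lambda>h. DG (L z0) (h *\<^sub>R v))) (at z0)"
    by (simp add: at_within_open[OF V(2) V(1)])
  moreover have "(\<lambda>h. DG (L z0) (h *\<^sub>R v)) = (\<lambda>h. DG (L z0) v * h)"
    using DGl[OF LV[OF V(2)]] by (auto simp: linear_scale fun_eq_iff)
  ultimately show ?thesis unfolding has_field_derivative_def by simp
qed

lemma dot_cong:
  assumes eq: "\<And>s. s \<in> {a..b} \<Longrightarrow> f s = g s" and s: "s \<in> {a..b}"
  shows "dot a b f s = dot a b g s"
proof -
  have "(f has_vector_derivative D) (at s within {a..b}) \<longleftrightarrow> (g has_vector_derivative D) (at s within {a..b})" for D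
    unfolding has_vector_derivative_def
  proof
    assume "(f has_derivative (\<lambda>x. x *\<^sub>R D)) (at s within {a..b})"
    then show "(g has_derivative (\<lambda>x. x *\<^sub>R D)) (at s within {a..b})"
      by (rule has_derivative_transform_within[OF _ zero_less_one s]) (use eq in auto)
  next
    assume "(g has_derivative (\<lambda>x. x *\<^sub>R D)) (at s within {a..b})"
    then show "(f has_derivative (\<lambda>x. x *\<^sub>R D)) (at s within {a..b})"
      by (rule has_derivative_transform_within[OF _ zero_less_one s]) (use eq in auto)
  qed
  then show ?thesis unfolding dot_def vector_derivative_def by simp
qed

lemma KP_cong:
  assumes eq: "\<And>s. s \<in> {a..b} \<Longrightarrow> f s = g s" and t: "t \<in> {a..b}"
  shows "KP a b k lam mu f t = KP a b k lam mu g t"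
proof -
  have "(LINT \<tau>:{a..t}|lebesgue. k t \<tau> * f \<tau>) = (LINT \<tau>:{a..t}|lebesgue. k t \<tau> * g \<tau>)"
    by (rule set_lebesgue_integral_cong) (use eq t in auto)
  moreover have "(LINT \<tau>:{t..b}|lebesgue. k \<tau> t * f \<tau>) = (LINT \<tau>:{t..b}|lebesgue. k \<tau> t * g \<tau>)"
    by (rule set_lebesgue_integral_cong) (use eq t in auto)
  ultimately show ?thesis unfolding KP_def by simp
qed

lemma unif_expand:
  fixes \<Phi> \<Phi>' :: "real \<Rightarrow> real \<Rightarrow> real"
  assumes eps: "eps > 0"
    and d: "\<And>s \<theta>. s \<in> A \<Longrightarrow> \<theta> \<in> {-eps<..<eps} \<Longrightarrow> ((\<lambda>\<theta>. \<Phi> \<theta> s) has_real_derivative \<Phi>' \<theta> s) (at \<theta>)"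
    and uc: "\<And>e. e > 0 \<Longrightarrow> \<exists>d>0. \<forall>s\<in>A. \<forall>\<theta>. \<bar>\<theta>\<bar> < d \<longrightarrow> \<bar>\<theta>\<bar> < eps \<longrightarrow> \<bar>\<Phi>' \<theta> s - \<Phi>' 0 s\<bar> \<le> e"
    and e: "e > 0"
  shows "\<exists>d>0. \<forall>\<theta>\<in>{-eps..eps}. \<bar>\<theta>\<bar> < d \<longrightarrow> (\<forall>s\<in>A. \<bar>\<Phi> \<theta> s - \<Phi> 0 s - \<theta> * \<Phi>' 0 s\<bar> \<le> e * \<bar>\<theta>\<bar>)"
proof -
  obtain d0 where d0: "d0 > 0" and dd: "\<forall>s\<in>A. \<forall>\<theta>. \<bar>\<theta>\<bar> < d0 \<longrightarrow> \<bar>\<theta>\<bar> < eps \<longrightarrow> \<bar>\<Phi>' \<theta> s - \<Phi>' 0 s\<bar> \<le> e"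
    using uc[OF e] by blast
  have main: "\<bar>\<Phi> \<theta> s - \<Phi> 0 s - \<theta> * \<Phi>' 0 s\<bar> \<le> e * \<bar>\<theta>\<bar>"
    if s: "s \<in> A" and th: "\<bar>\<theta>\<bar> < min d0 eps" for \<theta> s
  proof -
    define q where "q x = \<Phi> x s - x * \<Phi>' 0 s" for x
    have dq: "(q has_real_derivative (\<Phi>' x s - \<Phi>' 0 s)) (at x)" if "\<bar>x\<bar> < eps" for x
    proof -
      have hx: "x \<in> {-eps<..<eps}" using that by auto
      show ?thesis unfolding q_def using d[OF s hx] by (auto intro!: derivative_eq_intros)
    qed
    have bd: "\<bar>\<Phi>' x s - \<Phi>' 0 s\<bar> \<le> e" if "\<bar>x\<bar> \<le> \<bar>\<theta>\<bar>" for x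
      using dd s that th by auto
    have "\<bar>q \<theta> - q 0\<bar> \<le> e * \<bar>\<theta>\<bar>"
    proof (cases "\<theta> = 0")
      case True then show ?thesis by simp
    next
      case False
      show ?thesis
      proof (cases "\<theta> > 0")
        case True
        obtain z where z: "0 < z" "z < \<theta>" "q \<theta> - q 0 = (\<theta> - 0) * (\<Phi>' z s - \<Phi>' 0 s)"
          using MVT2[of 0 \<theta> q "\<lambda>x. \<Phi>' x s - \<Phi>' 0 s"] True th dq by auto
        have "\<bar>q \<theta> - q 0\<bar> = \<bar>\<theta>\<bar> * \<bar>\<Phi>' z s - \<Phi>' 0 s\<bar>" using z by (simp add: abs_mult)
        also have "\<dots> \<le> \<bar>\<theta>\<bar> * e" using bd[of z] z by (intro mult_left_mono) auto
        finally show ?thesis by (simp add: mult.commute)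
      next
        case False
        with \<open>\<theta> \<noteq> 0\<close> have neg: "\<theta> < 0" by simp
        obtain z where z: "\<theta> < z" "z < 0" "q 0 - q \<theta> = (0 - \<theta>) * (\<Phi>' z s - \<Phi>' 0 s)"
          using MVT2[of \<theta> 0 q "\<lambda>x. \<Phi>' x s - \<Phi>' 0 s"] neg th dq by auto
        have "\<bar>q \<theta> - q 0\<bar> = \<bar>q 0 - q \<theta>\<bar>" by simp
        also have "\<dots> = \<bar>\<theta>\<bar> * \<bar>\<Phi>' z s - \<Phi>' 0 s\<bar>" using z by (simp add: abs_mult)
        also have "\<dots> \<le> \<bar>\<theta>\<bar> * e" using bd[of z] z by (intro mult_left_mono) auto
        finally show ?thesis by (simp add: mult.commute)
      qed
    qed
    then show ?thesis unfolding q_def by (simp add: algebra_simps)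
  qed
  show ?thesis
    using main d0 eps by (intro exI[of _ "min d0 eps"]) auto
qed

locale phiL =
  fixes a b eps :: real and phi :: "real \<Rightarrow> real \<Rightarrow> real \<Rightarrow> real"
    and Dp :: "real \<times> real \<times> real \<Rightarrow> (real \<times> real \<times> real) \<Rightarrow>\<^sub>L real"
    and DDp :: "real \<times> real \<times> real \<Rightarrow> (real \<times> real \<times> real) \<Rightarrow>\<^sub>L ((real \<times> real \<times> real) \<Rightarrow>\<^sub>L real)"
    and y :: "real \<Rightarrow> real"
  assumes ab: "a < b" and eps: "0 < eps"
    and hp: "\<And>X. X \<in> {-eps..eps} \<times> {a..b} \<times> UNIV \<Longrightarrow>
       ((\<lambda>(\<theta>, t, x). phi \<theta> t x) has_derivative blinfun_apply (Dp X)) (at X within {-eps..eps} \<times> {a..b} \<times> UNIV)"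
    and hDp: "\<And>X. X \<in> {-eps..eps} \<times> {a..b} \<times> UNIV \<Longrightarrow>
       (Dp has_derivative blinfun_apply (DDp X)) (at X within {-eps..eps} \<times> {a..b} \<times> UNIV)"
    and cDp: "continuous_on ({-eps..eps} \<times> {a..b} \<times> UNIV) Dp"
    and cDDp: "continuous_on ({-eps..eps} \<times> {a..b} \<times> UNIV) DDp"
    and yC1: "C1_on {a..b} y"
    and phi0: "\<And>t x. t \<in> {a..b} \<Longrightarrow> phi 0 t x = x"
begin

abbreviation "S \<equiv> {-eps..eps} \<times> {a..b} \<times> (UNIV::real set)"
abbreviation "P3 \<equiv> (\<lambda>(\<theta>, t, x). phi \<theta> t x)"
abbreviation "yd \<equiv> dot a b y"
definition "w s = (0::real, 1::real, yd s)"
abbreviation "u \<equiv> (1::real, 0::real, 0::real)"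
abbreviation "xy \<equiv> (\<lambda>s. xi phi s (y s))"

lemma ydc: "continuous_on {a..b} yd" using C1_dot_cont[OF ab yC1] .
lemma yc: "continuous_on {a..b} y" using C1_cont[OF yC1] .
lemma wc: "continuous_on {a..b} w" unfolding w_def using ydc by (intro continuous_intros)

lemma y_vd: "s \<in> {a..b} \<Longrightarrow> (y has_vector_derivative yd s) (at s within {a..b})"
proof -
  obtain f' where f': "\<And>x. x \<in> {a..b} \<Longrightarrow> (y has_derivative blinfun_apply (f' x)) (at x within {a..b})"
    using yC1 unfolding C1_on_def by blast
  assume s: "s \<in> {a..b}"
  show ?thesis using C1_dot[OF ab f' s] by simp
qed

lemma xi_eq: assumes s: "s \<in> {a..b}" shows "xi phi s x = Dp (0, s, x) u"
proof -
  have "((\<lambda>\<theta>. P3 (\<theta>, s, x)) has_real_derivative Dp (0, s, x) u) (at 0)"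
  proof (rule deriv_along[of S P3 "\<lambda>X. blinfun_apply (Dp X)" "{-eps<..<eps}" 0 "\<lambda>\<theta>. (\<theta>, s, x)" u])
    show "\<And>X. X \<in> S \<Longrightarrow> (P3 has_derivative blinfun_apply (Dp X)) (at X within S)" by (rule hp)
    show "\<And>X. X \<in> S \<Longrightarrow> linear (blinfun_apply (Dp X))" by (rule bounded_linear.linear[OF blinfun.bounded_linear_right])
    show "open {-eps<..<eps}" by simp
    show "0 \<in> {-eps<..<eps}" using eps by simp
    show "\<And>z. z \<in> {-eps<..<eps} \<Longrightarrow> (z, s, x) \<in> S" using s by auto
    show "((\<lambda>\<theta>. (\<theta>, s, x)) has_derivative (\<lambda>h. h *\<^sub>R u)) (at 0)"
      by (rule has_derivative_eq_rhs, (rule derivative_intros)+) auto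
  qed
  then show ?thesis unfolding xi_def by (simp add: DERIV_imp_deriv)
qed

lemma M_deriv:
  assumes s: "s \<in> {a..b}"
  shows "((\<lambda>s. (\<theta>, s, y s)) has_derivative (\<lambda>h. h *\<^sub>R w s)) (at s within {a..b})"
proof -
  have "(y has_derivative (\<lambda>h. h *\<^sub>R yd s)) (at s within {a..b})"
    using y_vd[OF s] unfolding has_vector_derivative_def .
  then show ?thesis unfolding w_def
    by (rule has_derivative_eq_rhs[OF has_derivative_Pair[OF has_derivative_const has_derivative_Pair[OF has_derivative_ident]]]) auto
qed

lemma Yd:
  assumes th: "\<theta> \<in> {-eps..eps}" and s: "s \<in> {a..b}"
  shows "((\<lambda>s. phi \<theta> s (y s)) has_vector_derivative Dp (\<theta>, s, y s) (w s)) (at s within {a..b})"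
    and "dot a b (\<lambda>s. phi \<theta> s (y s)) s = Dp (\<theta>, s, y s) (w s)"
proof -
  have "((\<lambda>s. P3 (\<theta>, s, y s)) has_derivative (\<lambda>h. Dp (\<theta>, s, y s) (h *\<^sub>R w s))) (at s within {a..b})"
    by (rule has_derivative_in_compose2[of S P3 "\<lambda>X. blinfun_apply (Dp X)"])
      (use hp th s M_deriv[OF s] in auto)
  then show v: "((\<lambda>s. phi \<theta> s (y s)) has_vector_derivative Dp (\<theta>, s, y s) (w s)) (at s within {a..b})"
    unfolding has_vector_derivative_def by (simp add: blinfun.scaleR_right)
  show "dot a b (\<lambda>s. phi \<theta> s (y s)) s = Dp (\<theta>, s, y s) (w s)"
    unfolding dot_def using vector_derivative_within_closed_interval[of a b s _ "Dp (\<theta>, s, y s) (w s)"] v ab s by simp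
qed

lemma Ycont: "\<theta> \<in> {-eps..eps} \<Longrightarrow> continuous_on {a..b} (\<lambda>s. phi \<theta> s (y s))"
  unfolding continuous_on_eq_continuous_within
  using Yd(1) has_vector_derivative_continuous by blast

lemma Mcont: "\<theta> \<in> {-eps..eps} \<Longrightarrow> continuous_on {a..b} (\<lambda>s. (\<theta>, s, y s))"
  using yc by (intro continuous_intros)

lemma Ydcont: "\<theta> \<in> {-eps..eps} \<Longrightarrow> continuous_on {a..b} (\<lambda>s. Dp (\<theta>, s, y s) (w s))"
proof -
  assume th: "\<theta> \<in> {-eps..eps}"
  have "continuous_on {a..b} (\<lambda>s. Dp (\<theta>, s, y s))"
    by (rule continuous_on_compose2[OF cDp Mcont[OF th]]) (use th in auto)
  then show ?thesis using wc by (intro continuous_intros)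
qed

lemma xidot:
  assumes s: "s \<in> {a..b}"
  shows "(xy has_vector_derivative DDp (0, s, y s) (w s) u) (at s within {a..b})"
    and "dot a b xy s = DDp (0, s, y s) (w s) u"
proof -
  have z: "(0::real) \<in> {-eps..eps}" using eps by simp
  have "((\<lambda>s. Dp (0, s, y s)) has_derivative (\<lambda>h. DDp (0, s, y s) (h *\<^sub>R w s))) (at s within {a..b})"
    by (rule has_derivative_in_compose2[of S Dp "\<lambda>X. blinfun_apply (DDp X)"])
      (use hDp z s M_deriv[OF s] in auto)
  then have "((\<lambda>s. Dp (0, s, y s) u) has_derivative (\<lambda>h. DDp (0, s, y s) (h *\<^sub>R w s) u)) (at s within {a..b})"
    by (rule bounded_linear.has_derivative[OF blinfun.bounded_linear_left])
  then have "((\<lambda>s. Dp (0, s, y s) u) has_vector_derivative DDp (0, s, y s) (w s) u) (at s within {a..b})"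
    unfolding has_vector_derivative_def by (simp add: blinfun.scaleR_right blinfun.scaleR_left)
  then show v: "(xy has_vector_derivative DDp (0, s, y s) (w s) u) (at s within {a..b})"
    unfolding has_vector_derivative_def
    by (rule has_derivative_transform_within[OF _ zero_less_one s]) (simp add: xi_eq)
  show "dot a b xy s = DDp (0, s, y s) (w s) u"
    unfolding dot_def using vector_derivative_within_closed_interval[of a b s _ "DDp (0, s, y s) (w s) u"] v ab s by simp
qed


lemma schwarz_phi:
  assumes s: "s \<in> {a<..<b}"
  shows "DDp (0, s, x) v1 v2 = DDp (0, s, x) v2 v1"
proof -
  define U where "U = {-eps<..<eps} \<times> {a<..<b} \<times> (UNIV::real set)"
  have oU: "open U" unfolding U_def by (intro open_Times) auto
  have US: "U \<subseteq> S" unfolding U_def by auto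
  have P: "(0, s, x) \<in> U" using s eps unfolding U_def by auto
  have d1: "(P3 has_derivative blinfun_apply (Dp X)) (at X)" if "X \<in> U" for X
    using hp[of X] that US at_within_open_subset[OF that oU US] by auto
  have d2: "(Dp has_derivative blinfun_apply (DDp (0, s, x))) (at (0, s, x))"
    using hDp[of "(0, s, x)"] P US at_within_open_subset[OF P oU US] by auto
  show ?thesis using schwarz[OF oU P d1 d2] by simp
qed

lemma DDp_cont0: "continuous_on {a..b} (\<lambda>s. DDp (0, s, y s))"
  by (rule continuous_on_compose2[OF cDDp Mcont]) (use eps in auto)

lemma Q_eq:
  assumes s: "s \<in> {a..b}"
  shows "DDp (0, s, y s) (w s) u = DDp (0, s, y s) u (w s)"
proof -
  define f where "f = (\<lambda>s. DDp (0, s, y s) (w s) u - DDp (0, s, y s) u (w s))"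
  have c: "continuous_on (closure {a<..<b}) f"
    using ab DDp_cont0 wc unfolding f_def by (simp, intro continuous_intros) auto
  have "f s = 0"
    by (rule continuous_constant_on_closure[OF c]) (use schwarz_phi s ab in \<open>auto simp: f_def\<close>)
  then show ?thesis by (simp add: f_def)
qed

lemma dist_th: "dist (\<theta>::real, s::real, x::real) (0, s, x) = \<bar>\<theta>\<bar>"
  by (simp add: dist_Pair_Pair dist_real_def)

lemma uc_K:
  assumes f: "continuous_on S f" and e: "e > 0"
  shows "\<exists>d>0. \<forall>\<theta> s. \<theta> \<in> {-eps..eps} \<longrightarrow> s \<in> {a..b} \<longrightarrow> \<bar>\<theta>\<bar> < d \<longrightarrow>
            dist (f (\<theta>, s, y s)) (f (0, s, y s)) < e"
proof -
  obtain My where My: "\<And>s. s \<in> {a..b} \<Longrightarrow> norm (y s) \<le> My"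
    using compact_imp_bounded[OF compact_continuous_image[OF yc compact_Icc]]
    unfolding bounded_iff by blast
  define K where "K = {-eps..eps} \<times> {a..b} \<times> {-My..My}"
  have cK: "compact K" unfolding K_def by (intro compact_Times) auto
  have KS: "K \<subseteq> S" unfolding K_def by auto
  have "uniformly_continuous_on K f"
    by (rule compact_uniformly_continuous[OF continuous_on_subset[OF f KS] cK])
  then obtain d where d: "d > 0" and dd: "\<forall>x\<in>K. \<forall>x'\<in>K. dist x' x < d \<longrightarrow> dist (f x') (f x) < e"
    using e unfolding uniformly_continuous_on_def by blast
  have "\<forall>\<theta> s. \<theta> \<in> {-eps..eps} \<longrightarrow> s \<in> {a..b} \<longrightarrow> \<bar>\<theta>\<bar> < d \<longrightarrow>
            dist (f (\<theta>, s, y s)) (f (0, s, y s)) < e"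
  proof (intro allI impI)
    fix \<theta> s assume th: "\<theta> \<in> {-eps..eps}" and s: "s \<in> {a..b}" and td: "\<bar>\<theta>\<bar> < d"
    have "(\<theta>, s, y s) \<in> K" "(0, s, y s) \<in> K" using th s My[OF s] eps by (auto simp: abs_le_iff K_def)
    then show "dist (f (\<theta>, s, y s)) (f (0, s, y s)) < e" using dd td dist_th by metis
  qed
  then show ?thesis using d by blast
qed

lemma U1:
  assumes e: "e > 0"
  shows "\<exists>d>0. \<forall>\<theta>\<in>{-eps..eps}. \<bar>\<theta>\<bar> < d \<longrightarrow>
      (\<forall>s\<in>{a..b}. \<bar>phi \<theta> s (y s) - phi 0 s (y s) - \<theta> * xy s\<bar> \<le> e * \<bar>\<theta>\<bar>)"
proof -
  have "\<exists>d>0. \<forall>\<theta>\<in>{-eps..eps}. \<bar>\<theta>\<bar> < d \<longrightarrow>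
      (\<forall>s\<in>{a..b}. \<bar>phi \<theta> s (y s) - phi 0 s (y s) - \<theta> * Dp (0, s, y s) u\<bar> \<le> e * \<bar>\<theta>\<bar>)"
  proof (rule unif_expand[OF eps _ _ e, where \<Phi>' = "\<lambda>\<theta> s. Dp (\<theta>, s, y s) u"])
    fix s \<theta> assume s: "s \<in> {a..b}" and th: "\<theta> \<in> {-eps<..<eps}"
    show "((\<lambda>\<theta>. phi \<theta> s (y s)) has_real_derivative Dp (\<theta>, s, y s) u) (at \<theta>)"
    proof -
      have "((\<lambda>\<theta>. P3 (\<theta>, s, y s)) has_real_derivative Dp (\<theta>, s, y s) u) (at \<theta>)"
      proof (rule deriv_along[of S P3 "\<lambda>X. blinfun_apply (Dp X)" "{-eps<..<eps}" \<theta> "\<lambda>\<theta>. (\<theta>, s, y s)" u])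
        show "\<And>X. X \<in> S \<Longrightarrow> (P3 has_derivative blinfun_apply (Dp X)) (at X within S)" by (rule hp)
        show "\<And>X. X \<in> S \<Longrightarrow> linear (blinfun_apply (Dp X))" by (rule bounded_linear.linear[OF blinfun.bounded_linear_right])
        show "open {-eps<..<eps}" by simp
        show "\<theta> \<in> {-eps<..<eps}" using th by simp
        show "\<And>z. z \<in> {-eps<..<eps} \<Longrightarrow> (z, s, y s) \<in> S" using s by auto
        show "((\<lambda>\<theta>. (\<theta>, s, y s)) has_derivative (\<lambda>h. h *\<^sub>R u)) (at \<theta>)"
          by (rule has_derivative_eq_rhs, (rule derivative_intros)+) auto
      qed
      then show ?thesis by simp
    qed
  next
    fix e :: real assume e: "e > 0"
    obtain d where d: "d > 0" and dd: "\<forall>\<theta> s. \<theta> \<in> {-eps..eps} \<longrightarrow> s \<in> {a..b} \<longrightarrow> \<bar>\<theta>\<bar> < d \<longrightarrow>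
            dist (Dp (\<theta>, s, y s)) (Dp (0, s, y s)) < e"
      using uc_K[OF cDp e] by blast
    have "\<bar>Dp (\<theta>, s, y s) u - Dp (0, s, y s) u\<bar> \<le> e"
      if s: "s \<in> {a..b}" and "\<bar>\<theta>\<bar> < d" "\<bar>\<theta>\<bar> < eps" for s \<theta>
    proof -
      have "\<bar>Dp (\<theta>, s, y s) u - Dp (0, s, y s) u\<bar> = norm ((Dp (\<theta>, s, y s) - Dp (0, s, y s)) u)"
        by (simp add: blinfun.diff_left)
      also have "\<dots> \<le> norm (Dp (\<theta>, s, y s) - Dp (0, s, y s)) * norm u" by (rule norm_blinfun)
      also have "norm u = 1" by (simp add: norm_Pair)
      also have "norm (Dp (\<theta>, s, y s) - Dp (0, s, y s)) < e"
      proof -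
        have "\<theta> \<in> {-eps..eps}" using that(3) by auto
        then show ?thesis using dd that by (simp add: dist_norm)
      qed
      finally show ?thesis by simp
    qed
    then show "\<exists>d>0. \<forall>s\<in>{a..b}. \<forall>\<theta>. \<bar>\<theta>\<bar> < d \<longrightarrow> \<bar>\<theta>\<bar> < eps \<longrightarrow> \<bar>Dp (\<theta>, s, y s) u - Dp (0, s, y s) u\<bar> \<le> e"
      using d by blast
  qed
  then show ?thesis by (simp add: xi_eq)
qed

lemma Dpw_deriv:
  assumes s: "s \<in> {a..b}" and th: "\<theta> \<in> {-eps<..<eps}"
  shows "((\<lambda>\<theta>. Dp (\<theta>, s, y s) (w s)) has_real_derivative DDp (\<theta>, s, y s) u (w s)) (at \<theta>)"
proof -
  have "((\<lambda>\<theta>. (\<lambda>X. Dp X (w s)) (\<theta>, s, y s)) has_real_derivative (\<lambda>X h. DDp X h (w s)) (\<theta>, s, y s) u) (at \<theta>)"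
  proof (rule deriv_along[of S "\<lambda>X. Dp X (w s)" "\<lambda>X h. DDp X h (w s)" "{-eps<..<eps}" \<theta> "\<lambda>\<theta>. (\<theta>, s, y s)" u])
    show "\<And>X. X \<in> S \<Longrightarrow> ((\<lambda>X. Dp X (w s)) has_derivative (\<lambda>h. DDp X h (w s))) (at X within S)"
      by (rule bounded_linear.has_derivative[OF blinfun.bounded_linear_left hDp])
    show "\<And>X. X \<in> S \<Longrightarrow> linear (\<lambda>h. DDp X h (w s))"
      by (rule bounded_linear.linear[OF bounded_linear_compose[OF blinfun.bounded_linear_left blinfun.bounded_linear_right]])
    show "open {-eps<..<eps}" by simp
    show "\<theta> \<in> {-eps<..<eps}" using th by simp
    show "\<And>z. z \<in> {-eps<..<eps} \<Longrightarrow> (z, s, y s) \<in> S" using s by auto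
    show "((\<lambda>\<theta>. (\<theta>, s, y s)) has_derivative (\<lambda>h. h *\<^sub>R u)) (at \<theta>)"
      by (rule has_derivative_eq_rhs, (rule derivative_intros)+) auto
  qed
  then show ?thesis by simp
qed

lemma dot_xy_eq: "s \<in> {a..b} \<Longrightarrow> dot a b xy s = DDp (0, s, y s) u (w s)"
  using xidot(2) Q_eq by simp

lemma dot_xy_cont: "continuous_on {a..b} (dot a b xy)"
proof -
  have "continuous_on {a..b} (\<lambda>s. DDp (0, s, y s) u (w s))"
    using DDp_cont0 wc by (intro continuous_intros)
  then show ?thesis by (rule continuous_on_eq) (simp add: dot_xy_eq)
qed

lemma dotY_cont: assumes th: "\<theta> \<in> {-eps..eps}" shows "continuous_on {a..b} (dot a b (\<lambda>s. phi \<theta> s (y s)))"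
  using Ydcont[OF th] by (rule continuous_on_eq) (simp add: Yd(2)[OF th])

lemma U2:
  assumes e: "e > 0"
  shows "\<exists>d>0. \<forall>\<theta>\<in>{-eps..eps}. \<bar>\<theta>\<bar> < d \<longrightarrow>
      (\<forall>s\<in>{a..b}. \<bar>dot a b (\<lambda>s. phi \<theta> s (y s)) s - dot a b (\<lambda>s. phi 0 s (y s)) s - \<theta> * dot a b xy s\<bar> \<le> e * \<bar>\<theta>\<bar>)"
proof -
  have "\<exists>d>0. \<forall>\<theta>\<in>{-eps..eps}. \<bar>\<theta>\<bar> < d \<longrightarrow>
      (\<forall>s\<in>{a..b}. \<bar>Dp (\<theta>, s, y s) (w s) - Dp (0, s, y s) (w s) - \<theta> * DDp (0, s, y s) u (w s)\<bar> \<le> e * \<bar>\<theta>\<bar>)"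
  proof (rule unif_expand[OF eps _ _ e, where \<Phi>' = "\<lambda>\<theta> s. DDp (\<theta>, s, y s) u (w s)"])
    fix s \<theta> assume s: "s \<in> {a..b}" and th: "\<theta> \<in> {-eps<..<eps}"
    show "((\<lambda>\<theta>. Dp (\<theta>, s, y s) (w s)) has_real_derivative DDp (\<theta>, s, y s) u (w s)) (at \<theta>)"
      by (rule Dpw_deriv[OF s th])
  next
    fix e :: real assume e: "e > 0"
    obtain Mw where Mw: "\<And>s. s \<in> {a..b} \<Longrightarrow> norm (w s) \<le> Mw"
      using compact_imp_bounded[OF compact_continuous_image[OF wc compact_Icc]]
      unfolding bounded_iff by blast
    define C where "C = \<bar>Mw\<bar> + 1"
    have C: "C > 0" by (simp add: C_def add_nonneg_pos)
    obtain d where d: "d > 0" and dd: "\<forall>\<theta> s. \<theta> \<in> {-eps..eps} \<longrightarrow> s \<in> {a..b} \<longrightarrow> \<bar>\<theta>\<bar> < d \<longrightarrow>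
            dist (DDp (\<theta>, s, y s)) (DDp (0, s, y s)) < e / C"
      using uc_K[OF cDDp, of "e / C"] e C by auto
    have "\<bar>DDp (\<theta>, s, y s) u (w s) - DDp (0, s, y s) u (w s)\<bar> \<le> e"
      if s: "s \<in> {a..b}" and "\<bar>\<theta>\<bar> < d" "\<bar>\<theta>\<bar> < eps" for s \<theta>
    proof -
      have th: "\<theta> \<in> {-eps..eps}" using that(3) by auto
      have n: "norm (DDp (\<theta>, s, y s) - DDp (0, s, y s)) < e / C"
        using dd that th by (simp add: dist_norm)
      have "\<bar>DDp (\<theta>, s, y s) u (w s) - DDp (0, s, y s) u (w s)\<bar> = norm (((DDp (\<theta>, s, y s) - DDp (0, s, y s)) u) (w s))"
        by (simp add: blinfun.diff_left)
      also have "\<dots> \<le> norm ((DDp (\<theta>, s, y s) - DDp (0, s, y s)) u) * norm (w s)" by (rule norm_blinfun)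
      also have "\<dots> \<le> (norm (DDp (\<theta>, s, y s) - DDp (0, s, y s)) * norm u) * C"
      proof (rule mult_mono)
        show "norm ((DDp (\<theta>, s, y s) - DDp (0, s, y s)) u) \<le> norm (DDp (\<theta>, s, y s) - DDp (0, s, y s)) * norm u"
          by (rule norm_blinfun)
        show "norm (w s) \<le> C" using Mw[OF s] by (simp add: C_def)
      qed auto
      also have "norm u = 1" by (simp add: norm_Pair)
      also have "norm (DDp (\<theta>, s, y s) - DDp (0, s, y s)) * 1 * C \<le> e / C * C"
        using n C by (intro mult_right_mono) auto
      also have "\<dots> = e" using C by simp
      finally show ?thesis .
    qed
    then show "\<exists>d>0. \<forall>s\<in>{a..b}. \<forall>\<theta>. \<bar>\<theta>\<bar> < d \<longrightarrow> \<bar>\<theta>\<bar> < eps \<longrightarrow> \<bar>DDp (\<theta>, s, y s) u (w s) - DDp (0, s, y s) u (w s)\<bar> \<le> e"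
      using d by blast
  qed
  moreover have "0 \<in> {-eps..eps}" using eps by simp
  ultimately show ?thesis by (simp add: Yd(2) dot_xy_eq)
qed

lemma c3_deriv:
  assumes t: "t \<in> {a<..<b}"
  shows "((\<lambda>\<theta>. dot a b (\<lambda>s. phi \<theta> s (y s)) t) has_real_derivative dot a b xy t) (at 0)"
proof -
  have t': "t \<in> {a..b}" using t by auto
  have "((\<lambda>\<theta>. Dp (\<theta>, t, y t) (w t)) has_real_derivative DDp (0, t, y t) u (w t)) (at 0)"
    by (rule Dpw_deriv[OF t']) (use eps in auto)
  then have "((\<lambda>\<theta>. dot a b (\<lambda>s. phi \<theta> s (y s)) t) has_real_derivative DDp (0, t, y t) u (w t)) (at 0)"
    by (rule has_field_derivative_transform_within_open[of _ _ _ "{-eps<..<eps}"])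
      (use eps t' in \<open>auto simp: Yd(2)\<close>)
  then show ?thesis by (simp add: dot_xy_eq[OF t'])
qed

lemma c1_deriv:
  assumes t: "t \<in> {a..b}"
  shows "((\<lambda>\<theta>. phi \<theta> t (y t)) has_real_derivative xy t) (at 0)"
proof -
  have "((\<lambda>\<theta>. P3 (\<theta>, t, y t)) has_real_derivative Dp (0, t, y t) u) (at 0)"
  proof (rule deriv_along[of S P3 "\<lambda>X. blinfun_apply (Dp X)" "{-eps<..<eps}" 0 "\<lambda>\<theta>. (\<theta>, t, y t)" u])
    show "\<And>X. X \<in> S \<Longrightarrow> (P3 has_derivative blinfun_apply (Dp X)) (at X within S)" by (rule hp)
    show "\<And>X. X \<in> S \<Longrightarrow> linear (blinfun_apply (Dp X))" by (rule bounded_linear.linear[OF blinfun.bounded_linear_right])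
    show "open {-eps<..<eps}" by simp
    show "0 \<in> {-eps<..<eps}" using eps by simp
    show "\<And>z. z \<in> {-eps<..<eps} \<Longrightarrow> (z, t, y t) \<in> S" using t by auto
    show "((\<lambda>\<theta>. (\<theta>, t, y t)) has_derivative (\<lambda>h. h *\<^sub>R u)) (at 0)"
      by (rule has_derivative_eq_rhs, (rule derivative_intros)+) auto
  qed
  then show ?thesis using xi_eq[OF t] by simp
qed

end

lemma Fpart:
  fixes F :: lagr and DF :: "real \<times> real \<times> real \<times> real \<times> real \<Rightarrow> (real \<times> real \<times> real \<times> real \<times> real) \<Rightarrow>\<^sub>L real"
  assumes hF: "\<And>X. X \<in> UNIV \<times> UNIV \<times> UNIV \<times> UNIV \<times> {a..b} \<Longrightarrow>
      ((\<lambda>(x1, x2, x3, x4, t). F x1 x2 x3 x4 t) has_derivative blinfun_apply (DF X)) (at X within UNIV \<times> UNIV \<times> UNIV \<times> UNIV \<times> {a..b})"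
    and t: "t \<in> {a..b}"
  shows "deriv (\<lambda>z. F z x2 x3 x4 t) x1 = DF (x1, x2, x3, x4, t) (1, 0, 0, 0, 0)"
    and "deriv (\<lambda>z. F x1 z x3 x4 t) x2 = DF (x1, x2, x3, x4, t) (0, 1, 0, 0, 0)"
    and "deriv (\<lambda>z. F x1 x2 z x4 t) x3 = DF (x1, x2, x3, x4, t) (0, 0, 1, 0, 0)"
    and "deriv (\<lambda>z. F x1 x2 x3 z t) x4 = DF (x1, x2, x3, x4, t) (0, 0, 0, 1, 0)"
proof -
  let ?D = "UNIV \<times> UNIV \<times> UNIV \<times> UNIV \<times> {a..b}"
  let ?F = "\<lambda>(x1, x2, x3, x4, t). F x1 x2 x3 x4 t"
  have DFl: "\<And>X. X \<in> ?D \<Longrightarrow> linear (blinfun_apply (DF X))"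
    by (rule bounded_linear.linear[OF blinfun.bounded_linear_right])
  have "((\<lambda>z. ?F (z, x2, x3, x4, t)) has_real_derivative DF (x1, x2, x3, x4, t) (1, 0, 0, 0, 0)) (at x1)"
    by (rule deriv_along[OF hF DFl, of UNIV]) (use t in \<open>auto intro!: derivative_eq_intros simp: zero_prod_def\<close>)
  then show "deriv (\<lambda>z. F z x2 x3 x4 t) x1 = DF (x1, x2, x3, x4, t) (1, 0, 0, 0, 0)"
    by (simp add: DERIV_imp_deriv)
  have "((\<lambda>z. ?F (x1, z, x3, x4, t)) has_real_derivative DF (x1, x2, x3, x4, t) (0, 1, 0, 0, 0)) (at x2)"
    by (rule deriv_along[OF hF DFl, of UNIV]) (use t in \<open>auto intro!: derivative_eq_intros simp: zero_prod_def\<close>)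
  then show "deriv (\<lambda>z. F x1 z x3 x4 t) x2 = DF (x1, x2, x3, x4, t) (0, 1, 0, 0, 0)"
    by (simp add: DERIV_imp_deriv)
  have "((\<lambda>z. ?F (x1, x2, z, x4, t)) has_real_derivative DF (x1, x2, x3, x4, t) (0, 0, 1, 0, 0)) (at x3)"
    by (rule deriv_along[OF hF DFl, of UNIV]) (use t in \<open>auto intro!: derivative_eq_intros simp: zero_prod_def\<close>)
  then show "deriv (\<lambda>z. F x1 x2 z x4 t) x3 = DF (x1, x2, x3, x4, t) (0, 0, 1, 0, 0)"
    by (simp add: DERIV_imp_deriv)
  have "((\<lambda>z. ?F (x1, x2, x3, z, t)) has_real_derivative DF (x1, x2, x3, x4, t) (0, 0, 0, 1, 0)) (at x4)"
    by (rule deriv_along[OF hF DFl, of UNIV]) (use t in \<open>auto intro!: derivative_eq_intros simp: zero_prod_def\<close>)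
  then show "deriv (\<lambda>z. F x1 x2 x3 z t) x4 = DF (x1, x2, x3, x4, t) (0, 0, 0, 1, 0)"
    by (simp add: DERIV_imp_deriv)
qed

theorem mainTheorem7:
  fixes a b p q lam mu eps :: real
    and k :: "real \<Rightarrow> real \<Rightarrow> real"
    and F :: lagr
    and phi :: "real \<Rightarrow> real \<Rightarrow> real \<Rightarrow> real"
    and y :: "real \<Rightarrow> real"
  assumes ab: "a < b"
    and p: "1 < p" and q: "q = p / (p - 1)"
    and k_meas: "set_borel_measurable lebesgue {(t, \<tau>). a \<le> \<tau> \<and> \<tau> < t \<and> t \<le> b} (\<lambda>z. k (fst z) (snd z))"
    and k_Lq: "set_integrable lebesgue {(t, \<tau>). a \<le> \<tau> \<and> \<tau> < t \<and> t \<le> b} (\<lambda>z. \<bar>k (fst z) (snd z)\<bar> powr q)"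
    and F_C1: "C1_on (UNIV \<times> UNIV \<times> UNIV \<times> UNIV \<times> {a..b})
                 (\<lambda>(x1, x2, x3, x4, t). F x1 x2 x3 x4 t)"
    and eps: "0 < eps"
    and phi_C2: "C2_on ({-eps..eps} \<times> {a..b} \<times> UNIV) (\<lambda>(\<theta>, t, x). phi \<theta> t x)"
    and phi0: "\<And>t x. t \<in> {a..b} \<Longrightarrow> phi 0 t x = x"
    and inv_xi: "\<And>z. admissible a b k lam mu z \<Longrightarrow>
                   C1_on {a..b} (\<lambda>t. xi phi t (z t))
                 \<and> continuous_on {a..b} (KP a b k lam mu (\<lambda>\<tau>. xi phi \<tau> (z \<tau>)))
                 \<and> continuous_on {a..b} (BP a b k lam mu (\<lambda>\<tau>. xi phi \<tau> (z \<tau>)))"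
    and inv_F: "\<And>z \<theta> t. admissible a b k lam mu z \<Longrightarrow> \<theta> \<in> {-eps..eps} \<Longrightarrow> t \<in> {a..b} \<Longrightarrow>
                 Fstar a b k lam mu F z t = Fstar a b k lam mu F (\<lambda>s. phi \<theta> s (z s)) t"
    and extremal: "gen_frac_extremal a b k lam mu F y"
  shows "\<forall>t\<in>{a<..<b}.
           deriv (\<lambda>s. xi phi s (y s) * d3F a b k lam mu F y s) t
         + (xi phi t (y t) * APs a b k lam mu (d4F a b k lam mu F y) t
            + d4F a b k lam mu F y t * BP a b k lam mu (\<lambda>\<tau>. xi phi \<tau> (y \<tau>)) t)
         + (- xi phi t (y t) * KPs a b k lam mu (d2F a b k lam mu F y) t
            + d2F a b k lam mu F y t * KP a b k lam mu (\<lambda>\<tau>. xi phi \<tau> (y \<tau>)) t)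
         = 0"
proof -
  let ?S = "{-eps..eps} \<times> {a..b} \<times> (UNIV::real set)"
  let ?D = "(UNIV::real set) \<times> (UNIV::real set) \<times> (UNIV::real set) \<times> (UNIV::real set) \<times> {a..b}"
  obtain Dp where hp: "\<And>X. X \<in> ?S \<Longrightarrow>
       ((\<lambda>(\<theta>, t, x). phi \<theta> t x) has_derivative blinfun_apply (Dp X)) (at X within ?S)"
    and C1Dp: "C1_on ?S Dp"
    using phi_C2 unfolding C2_on_def by blast
  obtain DDp where hDp: "\<And>X. X \<in> ?S \<Longrightarrow> (Dp has_derivative blinfun_apply (DDp X)) (at X within ?S)"
    and cDDp: "continuous_on ?S DDp"
    using C1Dp unfolding C1_on_def by blast
  have cDp: "continuous_on ?S Dp" using C1_cont[OF C1Dp] .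
  obtain DF where hF: "\<And>X. X \<in> ?D \<Longrightarrow>
      ((\<lambda>(x1, x2, x3, x4, t). F x1 x2 x3 x4 t) has_derivative blinfun_apply (DF X)) (at X within ?D)"
    and cDF: "continuous_on ?D DF"
    using F_C1 unfolding C1_on_def by blast
  have adm: "admissible a b k lam mu y" and EL: "\<And>t. t \<in> {a<..<b} \<Longrightarrow>
          deriv (d3F a b k lam mu F y) t + APs a b k lam mu (d4F a b k lam mu F y) t
          = d1F a b k lam mu F y t + KPs a b k lam mu (d2F a b k lam mu F y) t"
    and d3C1: "C1_on {a..b} (d3F a b k lam mu F y)"
    using extremal unfolding gen_frac_extremal_def by auto
  have yC1: "C1_on {a..b} y" and KPy: "continuous_on {a..b} (KP a b k lam mu y)"
    and BPy: "continuous_on {a..b} (BP a b k lam mu y)"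
    using adm unfolding admissible_def by auto
  interpret L: phiL a b eps phi Dp DDp y
    by (unfold_locales) (use ab eps hp hDp cDp cDDp yC1 phi0 in auto)
  define xy where "xy = (\<lambda>s. xi phi s (y s))"
  have xyC1: "C1_on {a..b} xy" and KPxy: "continuous_on {a..b} (KP a b k lam mu xy)"
    and BPxy: "continuous_on {a..b} (BP a b k lam mu xy)"
    using inv_xi[OF adm] unfolding xy_def by auto
  define star where "star s = (y s, KP a b k lam mu y s, dot a b y s, BP a b k lam mu y s, s)" for s
  define E where "E t = d1F a b k lam mu F y t * xy t + d2F a b k lam mu F y t * KP a b k lam mu xy t
      + d3F a b k lam mu F y t * dot a b xy t + d4F a b k lam mu F y t * BP a b k lam mu xy t" for t
  have dF: "d1F a b k lam mu F y s = DF (star s) (1, 0, 0, 0, 0)"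
     "d2F a b k lam mu F y s = DF (star s) (0, 1, 0, 0, 0)"
     "d3F a b k lam mu F y s = DF (star s) (0, 0, 1, 0, 0)"
     "d4F a b k lam mu F y s = DF (star s) (0, 0, 0, 1, 0)" if s: "s \<in> {a..b}" for s
    unfolding d1F_def d2F_def d3F_def d4F_def star_def using Fpart[OF hF s] by auto
  have stepA: "E t = 0" if t: "t \<in> {a<..<b}" and good1: "set_integrable lebesgue {a..t} (\<lambda>\<tau>. k t \<tau>)"
      and good2: "set_integrable lebesgue {t..b} (\<lambda>\<tau>. k \<tau> t)" for t
  proof -
    have t': "t \<in> {a..b}" using t by auto
    have c1: "((\<lambda>\<theta>. phi \<theta> t (y t)) has_real_derivative xy t) (at 0)"
      using L.c1_deriv[OF t'] unfolding xy_def .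
    have c2: "((\<lambda>\<theta>. KP a b k lam mu (\<lambda>s. phi \<theta> s (y s)) t) has_real_derivative KP a b k lam mu xy t) (at 0)"
      unfolding xy_def
      by (rule KP_deriv[OF good1 good2 t' eps]) (use L.Ycont C1_cont[OF xyC1] L.U1 in \<open>auto simp: xy_def\<close>)
    have c3: "((\<lambda>\<theta>. dot a b (\<lambda>s. phi \<theta> s (y s)) t) has_real_derivative dot a b xy t) (at 0)"
      using L.c3_deriv[OF t] unfolding xy_def .
    have c4: "((\<lambda>\<theta>. BP a b k lam mu (\<lambda>s. phi \<theta> s (y s)) t) has_real_derivative BP a b k lam mu xy t) (at 0)"
      unfolding xy_def BP_def
      by (rule KP_deriv[OF good1 good2 t' eps]) (use L.dotY_cont L.dot_xy_cont L.U2 in auto)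
    define v where "v = (xy t, KP a b k lam mu xy t, dot a b xy t, BP a b k lam mu xy t, 0::real)"
    define c where "c \<theta> = (phi \<theta> t (y t), KP a b k lam mu (\<lambda>s. phi \<theta> s (y s)) t,
        dot a b (\<lambda>s. phi \<theta> s (y s)) t, BP a b k lam mu (\<lambda>s. phi \<theta> s (y s)) t, t)" for \<theta>
    have cder: "(c has_derivative (\<lambda>h. h *\<^sub>R v)) (at 0)"
      unfolding c_def v_def
      using has_derivative_Pair[OF c1[unfolded has_field_derivative_def] has_derivative_Pair[OF
          c2[unfolded has_field_derivative_def] has_derivative_Pair[OF c3[unfolded has_field_derivative_def]
          has_derivative_Pair[OF c4[unfolded has_field_derivative_def] has_derivative_const[of t]]]]]
      by (rule has_derivative_eq_rhs) (auto simp: fun_eq_iff mult.commute)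
    have DFl: "\<And>X. X \<in> ?D \<Longrightarrow> linear (blinfun_apply (DF X))"
      by (rule bounded_linear.linear[OF blinfun.bounded_linear_right])
    have Gder: "((\<lambda>\<theta>. (\<lambda>(x1, x2, x3, x4, t). F x1 x2 x3 x4 t) (c \<theta>)) has_real_derivative DF (c 0) v) (at 0)"
      by (rule deriv_along[OF hF DFl, of UNIV 0 c v]) (use cder t' in \<open>auto simp: c_def\<close>)
    have const: "(\<lambda>(x1, x2, x3, x4, t). F x1 x2 x3 x4 t) (c \<theta>) = Fstar a b k lam mu F y t"
      if th: "\<theta> \<in> {-eps<..<eps}" for \<theta>
    proof -
      have th': "\<theta> \<in> {-eps..eps}" using th by auto
      have "(\<lambda>(x1, x2, x3, x4, t). F x1 x2 x3 x4 t) (c \<theta>) = Fstar a b k lam mu F (\<lambda>s. phi \<theta> s (y s)) t"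
        by (simp add: c_def Fstar_def)
      also have "\<dots> = Fstar a b k lam mu F y t" using inv_F[OF adm th' t'] by simp
      finally show ?thesis .
    qed
    have "((\<lambda>\<theta>. (\<lambda>(x1, x2, x3, x4, t). F x1 x2 x3 x4 t) (c \<theta>)) has_real_derivative 0) (at 0)"
      by (rule has_field_derivative_transform_within_open[of "\<lambda>\<theta>. Fstar a b k lam mu F y t" _ _ "{-eps<..<eps}"])
        (use eps const in auto)
    then have DF0: "DF (c 0) v = 0" using Gder DERIV_unique by blast
    have Y0: "phi 0 s (y s) = y s" if "s \<in> {a..b}" for s using phi0 that by simp
    have dY0: "dot a b (\<lambda>s. phi 0 s (y s)) s = dot a b y s" if "s \<in> {a..b}" for s
      by (rule dot_cong[OF Y0 that])
    have c0: "c 0 = star t"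
    proof -
      have "KP a b k lam mu (\<lambda>s. phi 0 s (y s)) t = KP a b k lam mu y t" by (rule KP_cong[OF Y0 t'])
      moreover have "BP a b k lam mu (\<lambda>s. phi 0 s (y s)) t = BP a b k lam mu y t"
        unfolding BP_def by (rule KP_cong[OF dY0 t'])
      ultimately show ?thesis unfolding c_def star_def using Y0[OF t'] dY0[OF t'] by simp
    qed
    have vsplit: "v = xy t *\<^sub>R (1,0,0,0,0) + KP a b k lam mu xy t *\<^sub>R (0,1,0,0,0)
        + dot a b xy t *\<^sub>R (0,0,1,0,0) + BP a b k lam mu xy t *\<^sub>R (0,0,0,1,0)"
      unfolding v_def by simp
    have "DF (star t) v = E t"
      unfolding E_def dF[OF t'] vsplit blinfun.add_right blinfun.scaleR_right by (simp add: mult.commute)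
    then show ?thesis using DF0 c0 by simp
  qed
  have contE: "continuous_on {a<..<b} E"
  proof -
    have starc: "continuous_on {a..b} star"
      unfolding star_def using C1_cont[OF yC1] KPy C1_dot_cont[OF ab yC1] BPy by (intro continuous_intros) auto
    have DFs: "continuous_on {a..b} (\<lambda>s. DF (star s))"
      by (rule continuous_on_compose2[OF cDF starc]) (auto simp: star_def)
    have "continuous_on {a..b} (\<lambda>s. DF (star s) (1,0,0,0,0) * xy s + DF (star s) (0,1,0,0,0) * KP a b k lam mu xy s
         + DF (star s) (0,0,1,0,0) * dot a b xy s + DF (star s) (0,0,0,1,0) * BP a b k lam mu xy s)"
      using DFs C1_cont[OF xyC1] KPxy C1_dot_cont[OF ab xyC1] BPxy by (intro continuous_intros)
    then have "continuous_on {a..b} E" by (rule continuous_on_eq) (simp add: E_def dF)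
    then show ?thesis by (rule continuous_on_subset) auto
  qed
  have q1: "q \<ge> 1" using p q by (simp add: le_divide_eq)
  have aeE: "AE t in lborel. t \<in> {a<..<b} \<longrightarrow> E t = 0"
    using good_AE[OF Delta_integrable[OF q1 k_meas k_Lq]] by eventually_elim (use stepA in blast)
  show ?thesis
  proof
    fix t assume t: "t \<in> {a<..<b}"
    have Et: "E t = 0" by (rule cont_zero_AE[OF contE aeE t])
    show "deriv (\<lambda>s. xi phi s (y s) * d3F a b k lam mu F y s) t
         + (xi phi t (y t) * APs a b k lam mu (d4F a b k lam mu F y) t
            + d4F a b k lam mu F y t * BP a b k lam mu (\<lambda>\<tau>. xi phi \<tau> (y \<tau>)) t)
         + (- xi phi t (y t) * KPs a b k lam mu (d2F a b k lam mu F y) t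
            + d2F a b k lam mu F y t * KP a b k lam mu (\<lambda>\<tau>. xi phi \<tau> (y \<tau>)) t)
         = 0"
    proof -
      have hx: "(xy has_real_derivative dot a b xy t) (at t)" by (rule C1_has_deriv_interior[OF ab xyC1 t])
      have h3: "(d3F a b k lam mu F y has_real_derivative dot a b (d3F a b k lam mu F y) t) (at t)"
        by (rule C1_has_deriv_interior[OF ab d3C1 t])
      have d3: "deriv (d3F a b k lam mu F y) t = dot a b (d3F a b k lam mu F y) t"
        using h3 by (rule DERIV_imp_deriv)
      have "((\<lambda>s. xy s * d3F a b k lam mu F y s) has_real_derivative
          dot a b xy t * d3F a b k lam mu F y t + xy t * dot a b (d3F a b k lam mu F y) t) (at t)"
        using DERIV_mult[OF hx h3] by (simp add: mult.commute)
      then have dp: "deriv (\<lambda>s. xy s * d3F a b k lam mu F y s) t =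
          dot a b xy t * d3F a b k lam mu F y t + xy t * deriv (d3F a b k lam mu F y) t"
        using d3 by (simp add: DERIV_imp_deriv)
      have "deriv (\<lambda>s. xy s * d3F a b k lam mu F y s) t
         + (xy t * APs a b k lam mu (d4F a b k lam mu F y) t
            + d4F a b k lam mu F y t * BP a b k lam mu xy t)
         + (- xy t * KPs a b k lam mu (d2F a b k lam mu F y) t
            + d2F a b k lam mu F y t * KP a b k lam mu xy t)
         = E t + xy t * ((deriv (d3F a b k lam mu F y) t + APs a b k lam mu (d4F a b k lam mu F y) t)
            - (d1F a b k lam mu F y t + KPs a b k lam mu (d2F a b k lam mu F y) t))"
        unfolding dp E_def by (simp add: algebra_simps)
      also have "\<dots> = 0" using Et EL[OF t] by simp
      finally show ?thesis unfolding xy_def .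
    qed
  qed
qed

end
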